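(* Let $\mathcal{H}$ be a separable infinite-dimensional Hilbert space and let $\Omega$ be a quantum channel (completely positive trace-preserving map) on the trace-class operators on $\mathcal{H}$ whose associated superoperator $\overline{\Omega}$ on $\mathcal{H}\otimes\mathcal{H}$ satisfies $0\le\overline{\Omega}\le \mathbb{1}$. Suppose that for every density operator $\sigma$ on $\mathcal{H}$ the sequence $(\Omega^N(\sigma))_N$ does not converge in trace norm. Then for every density operator $\sigma$, $\lim_{N\to\infty}\Omega^N(\sigma)=0$ in $S_2$; i.e. $\lim_{N\to\infty}\mathrm{tr}\{\Omega^N(\sigma)|\phi\rangle\langle\psi|\}=0$ for all vectors $|\phi\rangle,|\psi\rangle\in\mathcal{H}$.
   Context: Fixing an orthonormal basis $\{|i\rangle\}$ of $\mathcal{H}$, a Hilbert–Schmidt operator $\sigma=\sum_{ij}\sigma_{ij}|i\rangle\langle j|\in S_2$ is identified with the vector $|\sigma\rangle=\sum_{ij}\sigma_{ij}|i\rangle|j\rangle\in\mathcal{H}\otimes\mathcal{H}$ (so $\mathrm{tr}(\sigma^\dagger\sigma)=\langle\sigma|\sigma\rangle$); $\overline{\Omega}$ is the operator on $\mathcal{H}\otimes\mathcal{H}$ defined by $\overline{\Omega}|\sigma\rangle=|\Omega(\sigma)\rangle$. For instance, for $\Omega(\sigma)=\sum_{x,a}p_xF^x_a\sigma F^x_a$ with projectors $F^x_a$, $\overline{\Omega}=\sum_{x,a}p_xF^x_a\otimes(F^x_a)^*$. $S_2$ denotes the Hilbert–Schmidt operators with norm $\|A\|_2=\sqrt{\mathrm{tr}(A^\dagger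 A)}$. *)

theory Defs
  imports "HOL-Analysis.Analysis"
begin

text \<open>The separable infinite-dimensional Hilbert space H is modelled as l2(nat)
  via the fixed orthonormal basis |i>, i :: nat.  Vectors are coefficient
  sequences, operators are (infinite) matrices in that basis.\<close>

type_synonym vec = "nat \<Rightarrow> complex"
type_synonym mat = "nat \<Rightarrow> nat \<Rightarrow> complex"

definition ell2 :: "vec \<Rightarrow> bool" where
  "ell2 x \<longleftrightarrow> summable (\<lambda>i. (cmod (x i))\<^sup>2)"

definition vnorm :: "vec \<Rightarrow> real" where
  "vnorm x = sqrt (\<Sum>i. (cmod (x i))\<^sup>2)"

definition vinner :: "vec \<Rightarrow> vec \<Rightarrow> complex" where
  "vinner x y = (\<Sum>i. cnj (x i) * y i)"

definition mv :: "mat \<Rightarrow> vec \<Rightarrow> vec" where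
  "mv A x = (\<lambda>i. \<Sum>j. A i j * x j)"

definition mmult :: "mat \<Rightarrow> mat \<Rightarrow> mat" where
  "mmult A B = (\<lambda>i j. \<Sum>k. A i k * B k j)"

definition trace :: "mat \<Rightarrow> complex" where
  "trace A = (\<Sum>i. A i i)"

definition outer :: "vec \<Rightarrow> vec \<Rightarrow> mat" where
  "outer phi psi = (\<lambda>i j. phi i * cnj (psi j))"

definition mdiff :: "mat \<Rightarrow> mat \<Rightarrow> mat" where
  "mdiff A B = (\<lambda>i j. A i j - B i j)"

definition nuclear_rep :: "mat \<Rightarrow> (nat \<Rightarrow> vec) \<Rightarrow> (nat \<Rightarrow> vec) \<Rightarrow> bool" where
  "nuclear_rep A u v \<longleftrightarrow>
     (\<forall>k. ell2 (u k) \<and> ell2 (v k)) \<and>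
     summable (\<lambda>k. vnorm (u k) * vnorm (v k)) \<and>
     (\<forall>i j. (\<lambda>k. u k i * cnj (v k j)) sums A i j)"

definition trace_class :: "mat \<Rightarrow> bool" where
  "trace_class A \<longleftrightarrow> (\<exists>u v. nuclear_rep A u v)"

definition trace_norm :: "mat \<Rightarrow> real" where
  "trace_norm A = Inf {(\<Sum>k. vnorm (u k) * vnorm (v k)) | u v. nuclear_rep A u v}"

definition hs_inner :: "mat \<Rightarrow> mat \<Rightarrow> complex" where
  "hs_inner A B = infsum (\<lambda>(i,j). cnj (A i j) * B i j) UNIV"

definition hs_norm :: "mat \<Rightarrow> real" where
  "hs_norm A = sqrt (infsum (\<lambda>(i,j). (cmod (A i j))\<^sup>2) UNIV)"

definition pos_op :: "mat \<Rightarrow> bool" where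
  "pos_op A \<longleftrightarrow> (\<forall>x. ell2 x \<longrightarrow> vinner x (mv A x) \<in> \<real> \<and> 0 \<le> Re (vinner x (mv A x)))"

definition density :: "mat \<Rightarrow> bool" where
  "density A \<longleftrightarrow> trace_class A \<and> pos_op A \<and> trace A = 1"

text \<open>Positivity of an n x n block operator X = (X a b) on H (x) C^n.\<close>
definition block_pos :: "nat \<Rightarrow> (nat \<Rightarrow> nat \<Rightarrow> mat) \<Rightarrow> bool" where
  "block_pos n X \<longleftrightarrow> (\<forall>x :: nat \<Rightarrow> vec. (\<forall>a<n. ell2 (x a)) \<longrightarrow>
     (let s = (\<Sum>a<n. \<Sum>b<n. vinner (x a) (mv (X a b) (x b))) in s \<in> \<real> \<and> 0 \<le> Re s))"

text \<open>Quantum channel: linear, trace-preserving, completely positive map on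
  the trace-class operators (values outside the trace class are irrelevant).\<close>
definition quantum_channel :: "(mat \<Rightarrow> mat) \<Rightarrow> bool" where
  "quantum_channel \<Omega> \<longleftrightarrow>
     (\<forall>A. trace_class A \<longrightarrow> trace_class (\<Omega> A)) \<and>
     (\<forall>A B c. trace_class A \<longrightarrow> trace_class B \<longrightarrow>
        \<Omega> (\<lambda>i j. A i j + c * B i j) = (\<lambda>i j. \<Omega> A i j + c * \<Omega> B i j)) \<and>
     (\<forall>A. trace_class A \<longrightarrow> trace (\<Omega> A) = trace A) \<and>
     (\<forall>n X. (\<forall>a<n. \<forall>b<n. trace_class (X a b)) \<longrightarrow> block_pos n X \<longrightarrow>
        block_pos n (\<lambda>a b. \<Omega> (X a b)))"

text \<open>0 <= Omega-bar <= 1 for the superoperator Omega-bar |sigma> = |Omega(sigma)>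
  on H (x) H, i.e. 0 <= <sigma|Omega-bar|sigma> <= <sigma|sigma> (and the form is real).\<close>
definition superop_between_0_1 :: "(mat \<Rightarrow> mat) \<Rightarrow> bool" where
  "superop_between_0_1 \<Omega> \<longleftrightarrow> (\<forall>\<sigma>. trace_class \<sigma> \<longrightarrow>
     hs_inner \<sigma> (\<Omega> \<sigma>) \<in> \<real> \<and> 0 \<le> Re (hs_inner \<sigma> (\<Omega> \<sigma>)) \<and>
     Re (hs_inner \<sigma> (\<Omega> \<sigma>)) \<le> (hs_norm \<sigma>)\<^sup>2)"

end

theory Submission
  imports Defs
begin

lemma cs_real:
  fixes f g :: "nat \<Rightarrow> real"
  assumes sf: "summable (\<lambda>i. (f i)\<^sup>2)" and sg: "summable (\<lambda>i. (g i)\<^sup>2)"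
  shows "summable (\<lambda>i. \<bar>f i\<bar> * \<bar>g i\<bar>)"
    and "(\<Sum>i. \<bar>f i\<bar> * \<bar>g i\<bar>) \<le> sqrt (\<Sum>i. (f i)\<^sup>2) * sqrt (\<Sum>i. (g i)\<^sup>2)"
proof -
  have b: "(\<Sum>i<n. \<bar>f i\<bar> * \<bar>g i\<bar>) \<le> sqrt (\<Sum>i. (f i)\<^sup>2) * sqrt (\<Sum>i. (g i)\<^sup>2)" for n
  proof -
    have "(\<Sum>i<n. \<bar>f i\<bar> * \<bar>g i\<bar>) \<le> L2_set f {..<n} * L2_set g {..<n}"
      by (rule L2_set_mult_ineq)
    also have "\<dots> \<le> sqrt (\<Sum>i. (f i)\<^sup>2) * sqrt (\<Sum>i. (g i)\<^sup>2)"
      unfolding L2_set_def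
      using suminf_nonneg[OF sf] suminf_nonneg[OF sg]
      by (intro mult_mono real_sqrt_le_mono sum_le_suminf sf sg) (simp_all add: sum_nonneg)
    finally show ?thesis .
  qed
  show s: "summable (\<lambda>i. \<bar>f i\<bar> * \<bar>g i\<bar>)"
    by (rule summableI_nonneg_bounded[OF _ b]) auto
  show "(\<Sum>i. \<bar>f i\<bar> * \<bar>g i\<bar>) \<le> sqrt (\<Sum>i. (f i)\<^sup>2) * sqrt (\<Sum>i. (g i)\<^sup>2)"
    by (rule suminf_le_const[OF s b])
qed

lemma vnorm_nonneg: "ell2 x \<Longrightarrow> 0 \<le> vnorm x"
  unfolding vnorm_def ell2_def by (simp add: suminf_nonneg)

lemma vnorm_sq: "ell2 x \<Longrightarrow> (vnorm x)\<^sup>2 = (\<Sum>i. (cmod (x i))\<^sup>2)"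
  unfolding vnorm_def ell2_def by (simp add: suminf_nonneg)

lemma vinner_summable:
  assumes "ell2 x" "ell2 y"
  shows "summable (\<lambda>i. norm (cnj (x i) * y i))"
    and "summable (\<lambda>i. cnj (x i) * y i)"
    and "cmod (vinner x y) \<le> vnorm x * vnorm y"
proof -
  have e: "(\<lambda>i. norm (cnj (x i) * y i)) = (\<lambda>i. \<bar>cmod (x i)\<bar> * \<bar>cmod (y i)\<bar>)"
    by (simp add: norm_mult)
  have *: "summable (\<lambda>i. \<bar>cmod (x i)\<bar> * \<bar>cmod (y i)\<bar>)"
      "(\<Sum>i. \<bar>cmod (x i)\<bar> * \<bar>cmod (y i)\<bar>) \<le> vnorm x * vnorm y"
    using cs_real[of "\<lambda>i. cmod (x i)" "\<lambda>i. cmod (y i)"] assms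
    unfolding ell2_def vnorm_def by blast+
  show s: "summable (\<lambda>i. norm (cnj (x i) * y i))"
    unfolding e by (rule *(1))
  show "summable (\<lambda>i. cnj (x i) * y i)"
    by (rule summable_norm_cancel[OF s])
  have "cmod (vinner x y) \<le> (\<Sum>i. norm (cnj (x i) * y i))"
    unfolding vinner_def by (rule summable_norm[OF s])
  also have "\<dots> \<le> vnorm x * vnorm y" unfolding e by (rule *(2))
  finally show "cmod (vinner x y) \<le> vnorm x * vnorm y" .
qed

lemma ell2_scale: "ell2 x \<Longrightarrow> ell2 (\<lambda>i. c * x i)"
  unfolding ell2_def using summable_mult[of "\<lambda>i. (cmod (x i))\<^sup>2" "(cmod c)\<^sup>2"]
  by (simp add: norm_mult power_mult_distrib)

lemma vnorm_scale: "ell2 x \<Longrightarrow> vnorm (\<lambda>i. c * x i) = cmod c * vnorm x"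
proof -
  assume "ell2 x"
  then have "(\<Sum>i. (cmod c)\<^sup>2 * (cmod (x i))\<^sup>2) = (cmod c)\<^sup>2 * (\<Sum>i. (cmod (x i))\<^sup>2)"
    unfolding ell2_def by (rule suminf_mult)
  then show ?thesis unfolding vnorm_def norm_mult power_mult_distrib
    by (simp add: real_sqrt_mult)
qed

lemma ell2_zero: "ell2 (\<lambda>i. 0)" unfolding ell2_def by simp
lemma vnorm_zero: "vnorm (\<lambda>i. 0) = 0" unfolding vnorm_def by simp

lemma cmod_le_vnorm: "ell2 x \<Longrightarrow> cmod (x i) \<le> vnorm x"
proof -
  assume "ell2 x"
  then have "(cmod (x i))\<^sup>2 \<le> (\<Sum>i. (cmod (x i))\<^sup>2)"
    unfolding ell2_def using sum_le_suminf[of "\<lambda>i. (cmod (x i))\<^sup>2" "{i}"] by simp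
  then show ?thesis unfolding vnorm_def by (simp add: real_le_rsqrt)
qed

definition sqm :: "mat \<Rightarrow> nat \<times> nat \<Rightarrow> real" where
  "sqm A = (\<lambda>(i,j). (cmod (A i j))\<^sup>2)"
definition hs :: "mat \<Rightarrow> bool" where
  "hs A \<longleftrightarrow> sqm A summable_on UNIV"
definition hsq :: "mat \<Rightarrow> real" where
  "hsq A = infsum (sqm A) UNIV"
definition ipm :: "mat \<Rightarrow> mat \<Rightarrow> nat \<times> nat \<Rightarrow> complex" where
  "ipm A B = (\<lambda>(i,j). cnj (A i j) * B i j)"

lemma sqm_nonneg: "0 \<le> sqm A p" unfolding sqm_def by (simp add: case_prod_beta)

lemma hs_norm_eq: "hs_norm A = sqrt (hsq A)"
  unfolding hs_norm_def hsq_def sqm_def ..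

lemma hs_inner_eq: "hs_inner A B = infsum (ipm A B) UNIV"
  unfolding hs_inner_def ipm_def ..

lemma hsq_nonneg: "0 \<le> hsq A"
  unfolding hsq_def by (rule infsum_nonneg) (rule sqm_nonneg)

lemma hs_norm_sq: "(hs_norm A)\<^sup>2 = hsq A"
  unfolding hs_norm_eq using hsq_nonneg by simp

lemma hs_fin: "hs A \<Longrightarrow> finite F \<Longrightarrow> sum (sqm A) F \<le> hsq A"
  unfolding hs_def hsq_def
  by (rule finite_sum_le_infsum) (auto simp: sqm_nonneg)

lemma hs_intro:
  assumes "\<And>F. finite F \<Longrightarrow> sum (sqm A) F \<le> C"
  shows "hs A" "hsq A \<le> C"
proof -
  show h: "hs A" unfolding hs_def
  proof (rule nonneg_bdd_above_summable_on)
    show "bdd_above (sum (sqm A) ` {F. F \<subseteq> UNIV \<and> finite F})"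
      by (rule bdd_aboveI2[of _ _ C]) (simp add: assms)
  qed (rule sqm_nonneg)
  show "hsq A \<le> C" unfolding hsq_def
    by (rule infsum_le_finite_sums) (use h assms in \<open>simp_all add: hs_def\<close>)
qed

lemma hs_entry: "hs A \<Longrightarrow> (cmod (A i j))\<^sup>2 \<le> hsq A"
  using hs_fin[of A "{(i,j)}"] by (simp add: sqm_def)

lemma hs_entry': "hs A \<Longrightarrow> cmod (A i j) \<le> hs_norm A"
  using hs_entry[of A i j] unfolding hs_norm_eq by (simp add: real_le_rsqrt)

lemma sq_comb_le: "(cmod (a + c * b))\<^sup>2 \<le> 2 * (cmod a)\<^sup>2 + 2 * (cmod c)\<^sup>2 * (cmod b)\<^sup>2"
proof -
  have "cmod (a + c * b) \<le> cmod a + cmod c * cmod b"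
    using norm_triangle_ineq[of a "c*b"] by (simp add: norm_mult)
  then have "(cmod (a + c * b))\<^sup>2 \<le> (cmod a + cmod c * cmod b)\<^sup>2"
    by (rule power_mono) simp
  also have "\<dots> \<le> 2 * (cmod a)\<^sup>2 + 2 * (cmod c)\<^sup>2 * (cmod b)\<^sup>2"
  proof -
    have q: "(x + y)\<^sup>2 \<le> 2 * x\<^sup>2 + 2 * y\<^sup>2" for x y :: real
    proof -
      have "0 \<le> (x - y)\<^sup>2" by simp
      then show ?thesis unfolding power2_diff power2_sum by linarith
    qed
    show ?thesis using q[of "cmod a" "cmod c * cmod b"] by (simp add: power_mult_distrib)
  qed
  finally show ?thesis .
qed

lemma hs_comb: assumes "hs A" "hs B" shows "hs (\<lambda>i j. A i j + c * B i j)"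
proof (rule hs_intro(1))
  fix F :: "(nat\<times>nat) set" assume F: "finite F"
  have "sum (sqm (\<lambda>i j. A i j + c * B i j)) F \<le> sum (\<lambda>p. 2 * sqm A p + 2 * (cmod c)\<^sup>2 * sqm B p) F"
    by (rule sum_mono) (auto simp: sqm_def sq_comb_le)
  also have "\<dots> = 2 * sum (sqm A) F + 2 * (cmod c)\<^sup>2 * sum (sqm B) F"
    by (simp add: sum.distrib sum_distrib_left)
  also have "\<dots> \<le> 2 * hsq A + 2 * (cmod c)\<^sup>2 * hsq B"
    using hs_fin[OF assms(1) F] hs_fin[OF assms(2) F]
    by (intro add_mono mult_left_mono) auto
  finally show "sum (sqm (\<lambda>i j. A i j + c * B i j)) F \<le> 2 * hsq A + 2 * (cmod c)\<^sup>2 * hsq B" .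
qed

lemma hs_zero: "hs (\<lambda>i j. 0)" by (rule hs_intro(1)[of _ 0]) (simp add: sqm_def)

lemma hs_scale: "hs A \<Longrightarrow> hs (\<lambda>i j. c * A i j)"
  using hs_comb[OF hs_zero, of A c] by simp

lemma hs_mdiff: "hs A \<Longrightarrow> hs B \<Longrightarrow> hs (mdiff A B)"
  using hs_comb[of A B "-1"] by (simp add: mdiff_def)

lemma hs_rows:
  assumes "hs A"
  shows "summable (\<lambda>j. (cmod (A i j))\<^sup>2)"
    and "(\<Sum>i<n. \<Sum>j. (cmod (A i j))\<^sup>2) \<le> hsq A"
proof -
  have fin: "(\<Sum>i<n. \<Sum>j<m. (cmod (A i j))\<^sup>2) \<le> hsq A" for n m
  proof -
    have "(\<Sum>i<n. \<Sum>j<m. (cmod (A i j))\<^sup>2) = sum (sqm A) ({..<n} \<times> {..<m})"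
      by (simp add: sum.cartesian_product sqm_def)
    also have "\<dots> \<le> hsq A" by (rule hs_fin[OF assms]) simp
    finally show ?thesis .
  qed
  have s: "summable (\<lambda>j. (cmod (A i j))\<^sup>2)" for i
  proof (rule summableI_nonneg_bounded[of _ "hsq A"])
    fix m
    have "(\<Sum>j<m. (cmod (A i j))\<^sup>2) \<le> (\<Sum>i'<Suc i. \<Sum>j<m. (cmod (A i' j))\<^sup>2)"
      by (rule member_le_sum) (simp_all add: sum_nonneg)
    then show "(\<Sum>j<m. (cmod (A i j))\<^sup>2) \<le> hsq A" using fin[where n="Suc i" and m=m] by linarith
  qed simp
  then show "summable (\<lambda>j. (cmod (A i j))\<^sup>2)" .
  have "(\<Sum>i<n. \<Sum>j. (cmod (A i j))\<^sup>2) = (\<Sum>j. \<Sum>i<n. (cmod (A i j))\<^sup>2)"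
    by (rule suminf_sum[symmetric]) (rule s)
  also have "\<dots> \<le> hsq A"
    by (rule suminf_le_const) (auto intro!: summable_sum s simp: sum.swap[of _ "{..<n}"] fin)
  finally show "(\<Sum>i<n. \<Sum>j. (cmod (A i j))\<^sup>2) \<le> hsq A" .
qed

lemma ipm_abs_summable:
  assumes "hs A" "hs B" shows "(\<lambda>p. norm (ipm A B p)) summable_on UNIV" "ipm A B summable_on UNIV"
proof -
  have "(\<lambda>p. (1/2) * (sqm A p + sqm B p)) summable_on UNIV"
    using assms unfolding hs_def
    by (intro summable_on_cmult_right summable_on_add) auto
  then have "(\<lambda>p. (sqm A p + sqm B p) / 2) summable_on UNIV" by simp
  then show a: "(\<lambda>p. norm (ipm A B p)) summable_on UNIV"
  proof (rule summable_on_comparison_test)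
    fix p :: "nat\<times>nat"
    obtain i j where p: "p = (i,j)" by fastforce
    have "cmod (A i j) * cmod (B i j) \<le> ((cmod (A i j))\<^sup>2 + (cmod (B i j))\<^sup>2)/2"
      using sum_squares_bound[of "cmod (A i j)" "cmod (B i j)"] by (simp add: field_simps)
    then show "norm (ipm A B p) \<le> (sqm A p + sqm B p) / 2"
      by (simp add: p ipm_def sqm_def norm_mult)
  qed simp
  then show "ipm A B summable_on UNIV" by (rule abs_summable_summable)
qed

lemma hs_inner_comb_right:
  assumes "hs A" "hs B" "hs C"
  shows "hs_inner A (\<lambda>i j. B i j + c * C i j) = hs_inner A B + c * hs_inner A C"
proof -
  have e: "ipm A (\<lambda>i j. B i j + c * C i j) = (\<lambda>p. ipm A B p + c * ipm A C p)"
    by (auto simp: ipm_def algebra_simps)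
  show ?thesis unfolding hs_inner_eq e
    using ipm_abs_summable(2)[OF assms(1,2)] ipm_abs_summable(2)[OF assms(1,3)]
    by (simp add: infsum_add summable_on_cmult_right infsum_cmult_right)
qed

lemma hs_inner_cnj: "hs_inner B A = cnj (hs_inner A B)"
proof -
  have e: "ipm B A = (\<lambda>p. cnj (ipm A B p))" by (auto simp: ipm_def)
  show ?thesis unfolding hs_inner_eq e by simp
qed

lemma hs_inner_comb_left:
  assumes "hs A" "hs B" "hs C"
  shows "hs_inner (\<lambda>i j. B i j + c * C i j) A = hs_inner B A + cnj c * hs_inner C A"
  using hs_inner_comb_right[OF assms, of c]
  by (metis complex_cnj_add complex_cnj_mult complex_cnj_cnj hs_inner_cnj)

lemma cnj_mult_self: "cnj z * z = of_real ((cmod z)\<^sup>2)"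
  by (subst complex_norm_square) (rule mult.commute)

lemma hs_inner_self:
  assumes "hs A" shows "hs_inner A A = of_real (hsq A)"
proof -
  have e: "ipm A A = (\<lambda>p. of_real (sqm A p))"
    by (intro ext) (simp add: ipm_def sqm_def split_def cnj_mult_self)
  have "(sqm A has_sum hsq A) UNIV" using assms unfolding hs_def hsq_def
    by (simp add: has_sum_infsum)
  then have "(ipm A A has_sum of_real (hsq A)) UNIV" unfolding e by (rule has_sum_of_real)
  then show ?thesis unfolding hs_inner_eq by (rule infsumI)
qed

lemma limseq_even_odd':
  assumes "(\<lambda>n. f (2 * n)) \<longlonglongrightarrow> (l :: 'a :: topological_space)"
      and "(\<lambda>n. f (2 * n + 1)) \<longlonglongrightarrow> l"
  shows "f \<longlonglongrightarrow> l"
proof -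
  have ev: "eventually P sequentially"
    if E: "eventually (\<lambda>n. P (2 * n)) sequentially" and O: "eventually (\<lambda>n. P (2 * n + 1)) sequentially" for P
  proof -
    from E obtain n_e where e: "\<And>n. n \<ge> n_e \<Longrightarrow> P (2 * n)"
      by (auto simp: eventually_sequentially)
    from O obtain n_o where o: "\<And>n. n \<ge> n_o \<Longrightarrow> P (Suc (2 * n))"
      by (auto simp: eventually_sequentially)
    show ?thesis
      unfolding eventually_sequentially
    proof (intro exI allI impI)
      fix n assume "max (2 * n_e) (2 * n_o + 1) \<le> n" then show "P n"
        by (cases "even n") (auto elim!: evenE oddE intro: e o)
    qed
  qed
  show ?thesis using assms by (auto simp: filterlim_iff intro: ev)
qed

definition ilv :: "(nat \<Rightarrow> 'a) \<Rightarrow> (nat \<Rightarrow> 'a) \<Rightarrow> nat \<Rightarrow> 'a" where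
  "ilv f g k = (if even k then f (k div 2) else g (k div 2))"

lemma sum_ilv: "(\<Sum>i<2 * n. ilv f g i) = (\<Sum>i<n. f i) + (\<Sum>i<n. (g i :: 'a :: comm_monoid_add))"
proof (induct n)
  case 0 then show ?case by simp
next
  case (Suc n)
  have "(\<Sum>i<2 * Suc n. ilv f g i) = (\<Sum>i<2 * n. ilv f g i) + ilv f g (2*n) + ilv f g (2*n+1)"
    by (simp add: ac_simps)
  also have "\<dots> = (\<Sum>i<Suc n. f i) + (\<Sum>i<Suc n. g i)"
    using Suc by (simp add: ilv_def ac_simps)
  finally show ?case .
qed

lemma sums_ilv:
  fixes f g :: "nat \<Rightarrow> 'a :: real_normed_vector"
  assumes "f sums a" "g sums b" shows "ilv f g sums (a + b)"
  unfolding sums_def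
proof (rule limseq_even_odd')
  have e: "(\<lambda>n. \<Sum>i<2 * n. ilv f g i) \<longlonglongrightarrow> a + b"
    unfolding sum_ilv using assms unfolding sums_def by (rule tendsto_add)
  then show "(\<lambda>n. \<Sum>i<2 * n. ilv f g i) \<longlonglongrightarrow> a + b" .
  have "(\<lambda>n. (\<Sum>i<2 * n. ilv f g i) + f n) \<longlonglongrightarrow> a + b + 0"
    using e assms(1) summable_LIMSEQ_zero sums_summable by (intro tendsto_add) blast+
  moreover have "(\<Sum>i<2 * n + 1. ilv f g i) = (\<Sum>i<2 * n. ilv f g i) + f n" for n
    by (simp add: ilv_def)
  ultimately show "(\<lambda>n. \<Sum>i<2 * n + 1. ilv f g i) \<longlonglongrightarrow> a + b" by simp
qed

lemma nuclear_zero: "nuclear_rep (\<lambda>i j. 0) (\<lambda>k i. 0) (\<lambda>k i. 0)"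
  unfolding nuclear_rep_def by (simp add: ell2_zero vnorm_zero)

lemma tc_zero: "trace_class (\<lambda>i j. 0)"
  unfolding trace_class_def using nuclear_zero by blast

lemma trace_norm_zero: "trace_norm (\<lambda>i j. 0) = 0"
proof -
  let ?S = "{(\<Sum>k. vnorm (u k) * vnorm (v k)) | u v. nuclear_rep (\<lambda>i j. 0) u v}"
  have "0 \<in> ?S" using nuclear_zero by (force simp: vnorm_zero)
  moreover have "\<forall>x\<in>?S. 0 \<le> x"
    by (auto simp: nuclear_rep_def intro!: suminf_nonneg mult_nonneg_nonneg vnorm_nonneg)
  ultimately show ?thesis unfolding trace_norm_def
    by (intro cInf_eq_minimum) auto
qed

lemma tc_comb:
  assumes "trace_class A" "trace_class B"
  shows "trace_class (\<lambda>i j. A i j + c * B i j)"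
proof -
  obtain u v where r1: "nuclear_rep A u v" using assms(1) trace_class_def by blast
  obtain u' v' where r2: "nuclear_rep B u' v'" using assms(2) trace_class_def by blast
  define U where "U = ilv u (\<lambda>k i. c * u' k i)"
  define V where "V = ilv v v'"
  have "nuclear_rep (\<lambda>i j. A i j + c * B i j) U V"
    unfolding nuclear_rep_def
  proof (intro conjI allI)
    fix k show "ell2 (U k)" "ell2 (V k)" using r1 r2
      by (auto simp: U_def V_def ilv_def nuclear_rep_def ell2_scale)
  next
    have s1: "summable (\<lambda>k. vnorm (u k) * vnorm (v k))" using r1 by (simp add: nuclear_rep_def)
    have s2: "summable (\<lambda>k. cmod c * (vnorm (u' k) * vnorm (v' k)))"
      using r2 by (simp add: nuclear_rep_def summable_mult)
    have e: "(\<lambda>k. vnorm (U k) * vnorm (V k)) =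
         ilv (\<lambda>k. vnorm (u k) * vnorm (v k)) (\<lambda>k. cmod c * (vnorm (u' k) * vnorm (v' k)))"
      using r2 by (auto simp: U_def V_def ilv_def nuclear_rep_def vnorm_scale)
    show "summable (\<lambda>k. vnorm (U k) * vnorm (V k))"
      unfolding e using sums_ilv[OF summable_sums[OF s1] summable_sums[OF s2]] sums_summable by blast
  next
    fix i j
    have a: "(\<lambda>k. u k i * cnj (v k j)) sums A i j" using r1 by (simp add: nuclear_rep_def)
    have b: "(\<lambda>k. c * (u' k i * cnj (v' k j))) sums (c * B i j)"
      using r2 by (simp add: nuclear_rep_def sums_mult)
    have e: "(\<lambda>k. U k i * cnj (V k j)) = ilv (\<lambda>k. u k i * cnj (v k j)) (\<lambda>k. c * (u' k i * cnj (v' k j)))"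
      by (auto simp: U_def V_def ilv_def)
    show "(\<lambda>k. U k i * cnj (V k j)) sums (A i j + c * B i j)"
      unfolding e by (rule sums_ilv[OF a b])
  qed
  then show ?thesis unfolding trace_class_def by blast
qed

lemma tc_scale: "trace_class A \<Longrightarrow> trace_class (\<lambda>i j. c * A i j)"
  using tc_comb[OF tc_zero, of A c] by simp

lemma tc_mdiff: "trace_class A \<Longrightarrow> trace_class B \<Longrightarrow> trace_class (mdiff A B)"
  using tc_comb[of A B "-1"] by (simp add: mdiff_def)


lemma rank1_L2:
  assumes "ell2 a" "ell2 b" "finite F"
  shows "L2_set (\<lambda>p. cmod (a (fst p) * cnj (b (snd p)))) F \<le> vnorm a * vnorm b"
proof -
  let ?I = "fst ` F" and ?J = "snd ` F"
  have "(\<Sum>p\<in>F. (cmod (a (fst p) * cnj (b (snd p))))\<^sup>2) \<le> (\<Sum>p\<in>?I \<times> ?J. (cmod (a (fst p) * cnj (b (snd p))))\<^sup>2)"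
    by (rule sum_mono2) (use assms(3) in \<open>auto intro: rev_image_eqI\<close>)
  also have "\<dots> = (\<Sum>i\<in>?I. (cmod (a i))\<^sup>2) * (\<Sum>j\<in>?J. (cmod (b j))\<^sup>2)"
    by (simp add: sum.cartesian_product split_def sum_product norm_mult power_mult_distrib)
  also have "\<dots> \<le> (\<Sum>i. (cmod (a i))\<^sup>2) * (\<Sum>j. (cmod (b j))\<^sup>2)"
    using assms unfolding ell2_def
    by (intro mult_mono sum_le_suminf) (auto intro: sum_nonneg suminf_nonneg)
  also have "\<dots> = (vnorm a * vnorm b)\<^sup>2"
    using assms by (simp add: power_mult_distrib vnorm_sq)
  finally show ?thesis unfolding L2_set_def
    using assms by (simp add: real_sqrt_le_iff vnorm_nonneg real_le_lsqrt)
qed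

lemma L2_set_sum_triangle:
  fixes K :: nat shows "L2_set (\<lambda>p. cmod (\<Sum>k<K. w k p)) F \<le> (\<Sum>k<K. L2_set (\<lambda>p. cmod (w k p)) F)"
proof (induct K)
  case 0 then show ?case by (simp add: L2_set_def)
next
  case (Suc K)
  have "L2_set (\<lambda>p. cmod (\<Sum>k<Suc K. w k p)) F \<le> L2_set (\<lambda>p. cmod (\<Sum>k<K. w k p) + cmod (w K p)) F"
    by (rule L2_set_mono) (auto intro: norm_triangle_ineq)
  also have "\<dots> \<le> L2_set (\<lambda>p. cmod (\<Sum>k<K. w k p)) F + L2_set (\<lambda>p. cmod (w K p)) F"
    by (rule L2_set_triangle_ineq)
  also have "\<dots> \<le> (\<Sum>k<Suc K. L2_set (\<lambda>p. cmod (w k p)) F)"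
    using Suc by simp
  finally show ?case .
qed

lemma nuclear_hs:
  assumes r: "nuclear_rep A u v"
  shows "hs A" "hsq A \<le> (\<Sum>k. vnorm (u k) * vnorm (v k))\<^sup>2"
proof -
  let ?C = "(\<Sum>k. vnorm (u k) * vnorm (v k))"
  have uv: "\<And>k. ell2 (u k)" "\<And>k. ell2 (v k)" and sC: "summable (\<lambda>k. vnorm (u k) * vnorm (v k))"
    and sm: "\<And>i j. (\<lambda>k. u k i * cnj (v k j)) sums A i j"
    using r by (auto simp: nuclear_rep_def)
  have C0: "0 \<le> ?C" by (intro suminf_nonneg sC mult_nonneg_nonneg vnorm_nonneg uv)
  have fin: "sum (sqm A) F \<le> ?C\<^sup>2" if F: "finite F" for F
  proof -
    define S where "S K p = (\<Sum>k<K. u k (fst p) * cnj (v k (snd p)))" for K p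
    have b: "(\<Sum>p\<in>F. (cmod (S K p))\<^sup>2) \<le> ?C\<^sup>2" for K
    proof -
      have "L2_set (\<lambda>p. cmod (S K p)) F \<le> (\<Sum>k<K. L2_set (\<lambda>p. cmod (u k (fst p) * cnj (v k (snd p)))) F)"
        unfolding S_def by (rule L2_set_sum_triangle)
      also have "\<dots> \<le> (\<Sum>k<K. vnorm (u k) * vnorm (v k))"
        by (rule sum_mono) (rule rank1_L2[OF uv F])
      also have "\<dots> \<le> ?C"
        by (rule sum_le_suminf[OF sC]) (auto intro: mult_nonneg_nonneg vnorm_nonneg uv)
      finally have "sqrt (\<Sum>p\<in>F. (cmod (S K p))\<^sup>2) \<le> ?C" unfolding L2_set_def .
      then show ?thesis using C0 by (simp add: real_sqrt_le_iff sqrt_le_D)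
    qed
    have "(\<lambda>K. \<Sum>p\<in>F. (cmod (S K p))\<^sup>2) \<longlonglongrightarrow> (\<Sum>p\<in>F. (cmod (A (fst p) (snd p)))\<^sup>2)"
    proof (intro tendsto_sum tendsto_power tendsto_norm)
      fix p show "(\<lambda>K. S K p) \<longlonglongrightarrow> A (fst p) (snd p)"
        using sm[of "fst p" "snd p"] unfolding S_def sums_def .
    qed
    then have "(\<Sum>p\<in>F. (cmod (A (fst p) (snd p)))\<^sup>2) \<le> ?C\<^sup>2"
      by (rule LIMSEQ_le_const2) (use b in blast)
    then show ?thesis by (simp add: sqm_def split_def)
  qed
  show "hs A" by (rule hs_intro(1)[OF fin])
  show "hsq A \<le> ?C\<^sup>2" by (rule hs_intro(2)[OF fin])
qed

lemma tc_hs: "trace_class A \<Longrightarrow> hs A"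
  unfolding trace_class_def using nuclear_hs(1) by blast

lemma nuclear_diag:
  assumes r: "nuclear_rep A u v"
  shows "summable (\<lambda>i. cmod (A i i))"
proof -
  let ?C = "(\<Sum>k. vnorm (u k) * vnorm (v k))"
  have uv: "\<And>k. ell2 (u k)" "\<And>k. ell2 (v k)" and sC: "summable (\<lambda>k. vnorm (u k) * vnorm (v k))"
    and sm: "\<And>i j. (\<lambda>k. u k i * cnj (v k j)) sums A i j"
    using r by (auto simp: nuclear_rep_def)
  have sk: "summable (\<lambda>k. cmod (u k i) * cmod (v k i))" for i
    by (rule summable_comparison_test[OF _ sC])
       (auto intro!: mult_mono cmod_le_vnorm uv vnorm_nonneg)
  have le: "cmod (A i i) \<le> (\<Sum>k. cmod (u k i) * cmod (v k i))" for i
  proof -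
    have "A i i = (\<Sum>k. u k i * cnj (v k i))" using sm sums_unique by blast
    also have "cmod \<dots> \<le> (\<Sum>k. norm (u k i * cnj (v k i)))"
      by (rule summable_norm) (use sk[of i] in \<open>simp add: norm_mult\<close>)
    finally show ?thesis by (simp add: norm_mult)
  qed
  show ?thesis
  proof (rule summableI_nonneg_bounded[of _ ?C])
    fix n
    have "(\<Sum>i<n. cmod (A i i)) \<le> (\<Sum>i<n. \<Sum>k. cmod (u k i) * cmod (v k i))"
      by (rule sum_mono) (rule le)
    also have "\<dots> = (\<Sum>k. \<Sum>i<n. cmod (u k i) * cmod (v k i))"
      by (rule suminf_sum[symmetric]) (rule sk)
    also have "\<dots> \<le> ?C"
    proof (rule suminf_le)
      fix k
      have "(\<Sum>i<n. cmod (u k i) * cmod (v k i)) \<le> L2_set (\<lambda>i. cmod (u k i)) {..<n} * L2_set (\<lambda>i. cmod (v k i)) {..<n}"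
        using L2_set_mult_ineq[of "\<lambda>i. cmod (u k i)" "\<lambda>i. cmod (v k i)" "{..<n}"] by simp
      also have "\<dots> \<le> vnorm (u k) * vnorm (v k)"
        unfolding L2_set_def vnorm_def using uv[of k] unfolding ell2_def
        by (intro mult_mono real_sqrt_le_mono sum_le_suminf) (auto intro: sum_nonneg suminf_nonneg)
      finally show "(\<Sum>i<n. cmod (u k i) * cmod (v k i)) \<le> vnorm (u k) * vnorm (v k)" .
    qed (auto intro!: summable_sum sk sC)
    finally show "(\<Sum>i<n. cmod (A i i)) \<le> ?C" .
  qed simp
qed

lemma tc_diag: "trace_class A \<Longrightarrow> summable (\<lambda>i. cmod (A i i))"
  unfolding trace_class_def using nuclear_diag by blast

lemma ell2_cnj: "ell2 (\<lambda>j. cnj (x j)) = ell2 x" unfolding ell2_def by simp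
lemma vnorm_cnj: "vnorm (\<lambda>j. cnj (x j)) = vnorm x" unfolding vnorm_def by simp

lemma hs_row_ell2: "hs A \<Longrightarrow> ell2 (\<lambda>j. A i j)"
  unfolding ell2_def using hs_rows(1) by blast

lemma mv_row: "mv A x i = vinner (\<lambda>j. cnj (A i j)) x"
  unfolding mv_def vinner_def by simp

lemma mv_bound:
  assumes "hs A" "ell2 x"
  shows "ell2 (mv A x)" "vnorm (mv A x) \<le> hs_norm A * vnorm x"
    and "\<And>i. summable (\<lambda>j. A i j * x j)"
proof -
  have r: "ell2 (\<lambda>j. cnj (A i j))" for i using hs_row_ell2[OF assms(1)] ell2_cnj by blast
  show "summable (\<lambda>j. A i j * x j)" for i
    using vinner_summable(2)[OF r assms(2)] by simp
  have b: "(cmod (mv A x i))\<^sup>2 \<le> (\<Sum>j. (cmod (A i j))\<^sup>2) * (vnorm x)\<^sup>2" for i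
  proof -
    have "cmod (mv A x i) \<le> vnorm (\<lambda>j. A i j) * vnorm x"
      unfolding mv_row using vinner_summable(3)[OF r assms(2)] by (simp add: vnorm_cnj)
    then have "(cmod (mv A x i))\<^sup>2 \<le> (vnorm (\<lambda>j. A i j) * vnorm x)\<^sup>2"
      by (rule power_mono) simp
    also have "\<dots> = (\<Sum>j. (cmod (A i j))\<^sup>2) * (vnorm x)\<^sup>2"
      using hs_row_ell2[OF assms(1)] by (simp add: power_mult_distrib vnorm_sq)
    finally show ?thesis .
  qed
  have p: "(\<Sum>i<n. (cmod (mv A x i))\<^sup>2) \<le> hsq A * (vnorm x)\<^sup>2" for n
  proof -
    have "(\<Sum>i<n. (cmod (mv A x i))\<^sup>2) \<le> (\<Sum>i<n. (\<Sum>j. (cmod (A i j))\<^sup>2) * (vnorm x)\<^sup>2)"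
      by (rule sum_mono) (rule b)
    also have "\<dots> = (\<Sum>i<n. (\<Sum>j. (cmod (A i j))\<^sup>2)) * (vnorm x)\<^sup>2"
      by (simp add: sum_distrib_right)
    also have "\<dots> \<le> hsq A * (vnorm x)\<^sup>2"
      by (rule mult_right_mono[OF hs_rows(2)[OF assms(1)]]) simp
    finally show ?thesis .
  qed
  have s: "summable (\<lambda>i. (cmod (mv A x i))\<^sup>2)"
    by (rule summableI_nonneg_bounded[OF _ p]) simp
  then show e: "ell2 (mv A x)" unfolding ell2_def .
  have "(vnorm (mv A x))\<^sup>2 \<le> hsq A * (vnorm x)\<^sup>2"
    unfolding vnorm_sq[OF e] by (rule suminf_le_const[OF s p])
  also have "\<dots> = (hs_norm A * vnorm x)\<^sup>2" by (simp add: power_mult_distrib hs_norm_sq)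
  finally have "(vnorm (mv A x))\<^sup>2 \<le> (hs_norm A * vnorm x)\<^sup>2" .
  moreover have "0 \<le> hs_norm A * vnorm x"
    unfolding hs_norm_eq using vnorm_nonneg[OF assms(2)] hsq_nonneg[of A] by (intro mult_nonneg_nonneg) simp_all
  ultimately show "vnorm (mv A x) \<le> hs_norm A * vnorm x"
    by (rule power2_le_imp_le)
qed

lemma vinner_mv_bound:
  assumes "hs A" "ell2 x" "ell2 y"
  shows "cmod (vinner y (mv A x)) \<le> vnorm y * (hs_norm A * vnorm x)"
proof -
  have "cmod (vinner y (mv A x)) \<le> vnorm y * vnorm (mv A x)"
    by (rule vinner_summable(3)[OF assms(3) mv_bound(1)[OF assms(1,2)]])
  also have "\<dots> \<le> vnorm y * (hs_norm A * vnorm x)"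
    by (rule mult_left_mono[OF mv_bound(2)[OF assms(1,2)] vnorm_nonneg[OF assms(3)]])
  finally show ?thesis .
qed

lemma mv_comb:
  assumes "hs A" "hs B" "ell2 x"
  shows "mv (\<lambda>i j. A i j + c * B i j) x = (\<lambda>i. mv A x i + c * mv B x i)"
proof
  fix i
  have "(\<lambda>j. (A i j + c * B i j) * x j) = (\<lambda>j. A i j * x j + c * (B i j * x j))"
    by (simp add: algebra_simps)
  then show "mv (\<lambda>i j. A i j + c * B i j) x i = mv A x i + c * mv B x i"
    unfolding mv_def using mv_bound(3)[OF assms(1,3), of i] mv_bound(3)[OF assms(2,3), of i]
    by (simp add: suminf_add[symmetric] summable_mult suminf_mult)
qed

lemma vinner_comb:
  assumes "ell2 y" "ell2 a" "ell2 b"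
  shows "vinner y (\<lambda>i. a i + c * b i) = vinner y a + c * vinner y b"
proof -
  have "(\<lambda>i. cnj (y i) * (a i + c * b i)) = (\<lambda>i. cnj (y i) * a i + c * (cnj (y i) * b i))"
    by (simp add: algebra_simps)
  then show ?thesis
    unfolding vinner_def using vinner_summable(2)[OF assms(1,2)] vinner_summable(2)[OF assms(1,3)]
    by (simp add: suminf_add[symmetric] summable_mult suminf_mult)
qed

lemma vinner_mv_comb:
  assumes "hs A" "hs B" "ell2 x" "ell2 y"
  shows "vinner y (mv (\<lambda>i j. A i j + c * B i j) x) = vinner y (mv A x) + c * vinner y (mv B x)"
  unfolding mv_comb[OF assms(1-3)]
  by (rule vinner_comb[OF assms(4) mv_bound(1)[OF assms(1,3)] mv_bound(1)[OF assms(2,3)]])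

definition Q :: "nat \<Rightarrow> mat \<Rightarrow> vec \<Rightarrow> complex" where
  "Q n M y = (\<Sum>a<n. \<Sum>b<n. cnj (y a) * M a b * y b)"

lemma fin_supp_suminf: fixes f :: "nat \<Rightarrow> complex" shows "(\<And>j. j \<ge> n \<Longrightarrow> f j = 0) \<Longrightarrow> suminf f = (\<Sum>j<n. f j)"
proof -
  assume h: "\<And>j. j \<ge> n \<Longrightarrow> f j = 0"
  have "f sums (\<Sum>j\<in>{..<n}. f j)" by (rule sums_finite) (auto simp: h)
  then show ?thesis by (rule sums_unique[symmetric])
qed

lemma ell2_fin: "(\<And>j. j \<ge> n \<Longrightarrow> y j = 0) \<Longrightarrow> ell2 y"
  unfolding ell2_def by (rule sums_summable[OF sums_finite[of "{..<n}"]]) auto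

lemma Q_vinner:
  assumes "\<And>j. j \<ge> n \<Longrightarrow> y j = 0"
  shows "vinner y (mv M y) = Q n M y"
proof -
  have m: "mv M y i = (\<Sum>b<n. M i b * y b)" for i
    unfolding mv_def by (rule fin_supp_suminf) (simp add: assms)
  have "vinner y (mv M y) = (\<Sum>a<n. cnj (y a) * mv M y a)"
    unfolding vinner_def by (rule fin_supp_suminf) (simp add: assms)
  also have "\<dots> = Q n M y"
    unfolding Q_def m by (simp add: sum_distrib_left mult.assoc)
  finally show ?thesis .
qed

lemma Q_trunc: "Q n M (\<lambda>a. if a < n then y a else 0) = Q n M y"
  unfolding Q_def by (intro sum.cong refl) simp

lemma pos_Q: assumes "pos_op M" shows "Q n M y \<in> \<real>" "0 \<le> Re (Q n M y)"
proof -
  let ?y = "\<lambda>a. if a < n then y a else 0"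
  have e: "vinner ?y (mv M ?y) = Q n M y"
    using Q_vinner[of n "\<lambda>a. if a < n then y a else 0" M] by (simp add: Q_trunc)
  have "ell2 ?y" by (rule ell2_fin[of n]) simp
  then have "vinner ?y (mv M ?y) \<in> \<real> \<and> 0 \<le> Re (vinner ?y (mv M ?y))"
    using assms unfolding pos_op_def by blast
  then show "Q n M y \<in> \<real>" "0 \<le> Re (Q n M y)" unfolding e by auto
qed

lemma delta_sum_r:
  fixes j n :: nat assumes "j < n" shows "(\<Sum>b<n. f b * (t * (if b = j then 1 else 0))) = f j * (t::complex)"
proof -
  have "(\<Sum>b<n. f b * (t * (if b = j then 1 else 0))) = (\<Sum>b<n. if b = j then f j * t else 0)"
    by (rule sum.cong) auto
  also have "\<dots> = f j * t" using assms by simp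
  finally show ?thesis .
qed

lemma delta_sum_l:
  fixes j n :: nat assumes "j < n" shows "(\<Sum>b<n. (t * (if b = j then 1 else 0)) * f b) = (t::complex) * f j"
proof -
  have "(\<Sum>b<n. (t * (if b = j then 1 else 0)) * f b) = (\<Sum>b<n. if b = j then t * f j else 0)"
    by (rule sum.cong) auto
  also have "\<dots> = t * f j" using assms by simp
  finally show ?thesis .
qed

lemma Q_expand:
  assumes "j < n"
  shows "Q n M (\<lambda>k. y k + t * (if k = j then 1 else 0)) =
    Q n M y + cnj t * (\<Sum>b<n. M j b * y b) + t * (\<Sum>a<n. cnj (y a) * M a j) + cnj t * t * M j j"
proof -
  define d where "d k = t * (if k = j then 1 else (0::complex))" for k
  define e where "e k = cnj t * (if k = j then 1 else (0::complex))" for k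
  have cd: "cnj (d k) = e k" for k by (simp add: d_def e_def)
  have "Q n M (\<lambda>k. y k + d k) =
     (\<Sum>a<n. (\<Sum>b<n. cnj (y a) * M a b * y b) + (\<Sum>b<n. (cnj (y a) * M a b) * d b)
        + (\<Sum>b<n. e a * (M a b * y b)) + (\<Sum>b<n. e a * (M a b * d b)))"
    unfolding Q_def by (intro sum.cong refl) (simp add: cd sum.distrib[symmetric] algebra_simps)
  also have "\<dots> = Q n M y + (\<Sum>a<n. (cnj (y a) * M a j) * t) + (\<Sum>a<n. e a * (\<Sum>b<n. M a b * y b))
        + (\<Sum>a<n. e a * (M a j * t))"
    unfolding Q_def sum.distrib d_def using assms
    by (simp add: delta_sum_r sum_distrib_left[symmetric])
  also have "\<dots> = Q n M y + t * (\<Sum>a<n. cnj (y a) * M a j) + cnj t * (\<Sum>b<n. M j b * y b)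
        + cnj t * (M j j * t)"
    unfolding e_def delta_sum_l[OF assms] by (simp add: sum_distrib_left[symmetric] mult.commute)
  also have "\<dots> = Q n M y + cnj t * (\<Sum>b<n. M j b * y b) + t * (\<Sum>a<n. cnj (y a) * M a j) + cnj t * t * M j j"
    by (simp add: algebra_simps)
  finally show ?thesis unfolding d_def .
qed

lemma Q_zero: "Q n M (\<lambda>k. 0) = 0" unfolding Q_def by simp

lemma Q_delta:
  assumes "a < n" shows "Q n M (\<lambda>k. s * (if k = a then 1 else 0)) = cnj s * s * M a a"
  using Q_expand[OF assms, of M "\<lambda>k. 0" s] by (simp add: Q_zero)

lemma Q_two:
  assumes "a < n" "b < n"
  shows "Q n M (\<lambda>k. s * (if k = a then 1 else 0) + t * (if k = b then 1 else 0)) =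
     cnj s * s * M a a + cnj t * (M b a * s) + t * (cnj s * M a b) + cnj t * t * M b b"
proof -
  have c: "(\<Sum>a'<n. cnj (s * (if a' = a then 1 else 0)) * M a' b) = cnj s * M a b"
  proof -
    have "(\<Sum>a'<n. cnj (s * (if a' = a then 1 else 0)) * M a' b) = (\<Sum>a'<n. (cnj s * (if a' = a then 1 else 0)) * M a' b)"
      by (rule sum.cong) auto
    then show ?thesis using delta_sum_l[OF assms(1), of "cnj s" "\<lambda>a'. M a' b"] by simp
  qed
  show ?thesis
    using Q_expand[OF assms(2), of M "\<lambda>k. s * (if k = a then 1 else 0)" t]
    unfolding Q_delta[OF assms(1)] delta_sum_r[OF assms(1)] c .
qed

lemma herm_of_Q:
  assumes real: "\<And>y. Q n M y \<in> \<real>" and ab: "a < n" "b < n"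
  shows "M b a = cnj (M a b)"
proof -
  have d: "M c c \<in> \<real>" if "c < n" for c
    using real[of "\<lambda>k. 1 * (if k = c then 1 else 0)"] unfolding Q_delta[OF that, of M 1] by simp
  have r1: "M a a + M b a + M a b + M b b \<in> \<real>"
    using real[of "\<lambda>k. 1 * (if k = a then 1 else 0) + 1 * (if k = b then 1 else 0)"]
    unfolding Q_two[OF ab, of M 1 1] by (simp add: add.assoc)
  have r2: "M a a - \<i> * M b a + \<i> * M a b + M b b \<in> \<real>"
    using real[of "\<lambda>k. 1 * (if k = a then 1 else 0) + \<i> * (if k = b then 1 else 0)"]
    unfolding Q_two[OF ab, of M 1 \<i>] by (simp add: add.assoc)
  have "Im (M a a + M b a + M a b + M b b) = 0" using r1 by (simp add: complex_is_Real_iff)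
  moreover have "Im (M a a - \<i> * M b a + \<i> * M a b + M b b) = 0" using r2 by (simp add: complex_is_Real_iff)
  moreover have "Im (M a a) = 0" "Im (M b b) = 0" using d ab by (auto simp: complex_is_Real_iff)
  ultimately show ?thesis unfolding complex_eq_iff by simp
qed

lemma pos_herm: "pos_op M \<Longrightarrow> M b a = cnj (M a b)"
  by (rule herm_of_Q[of "Suc (max a b)"]) (simp_all add: pos_Q less_Suc_eq_le)

lemma pos_diag: assumes "pos_op M" shows "M a a \<in> \<real>" "0 \<le> Re (M a a)"
  using pos_Q[OF assms, of "Suc a" "\<lambda>k. 1 * (if k = a then 1 else 0)"]
  unfolding Q_delta[of a "Suc a" M 1, OF lessI] by simp_all

lemma block_pos_1: "block_pos 1 X \<longleftrightarrow> pos_op (X 0 0)"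
  unfolding block_pos_def pos_op_def
proof safe
  fix x assume h: "\<forall>x. (\<forall>a<1. ell2 (x a)) \<longrightarrow> (let s = \<Sum>a<1. \<Sum>b<1. vinner (x a) (mv (X a b) (x b)) in s \<in> \<real> \<and> 0 \<le> Re s)"
    and x: "ell2 x"
  from h[rule_format, of "\<lambda>a. x"] x
  show "vinner x (mv (X 0 0) x) \<in> \<real>" "0 \<le> Re (vinner x (mv (X 0 0) x))" by (simp_all add: Let_def)
next
  fix x :: "nat \<Rightarrow> vec" assume h: "\<forall>x. ell2 x \<longrightarrow> vinner x (mv (X 0 0) x) \<in> \<real> \<and> 0 \<le> Re (vinner x (mv (X 0 0) x))"
    and x: "\<forall>a<1. ell2 (x a)"
  then show "let s = \<Sum>a<1. \<Sum>b<1. vinner (x a) (mv (X a b) (x b)) in s \<in> \<real> \<and> 0 \<le> Re s"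
    by (simp add: Let_def)
qed

function G :: "mat \<Rightarrow> nat \<Rightarrow> nat \<Rightarrow> complex" where
  "G L i k = (if k < i then (if G L k k = 0 then 0 else (L i k - (\<Sum>m<k. G L i m * cnj (G L k m))) / G L k k)
     else if k = i then complex_of_real (sqrt (Re (L i i - (\<Sum>m<i. G L i m * cnj (G L i m))))) else 0)"
  by pat_completeness auto
termination by (relation "inv_image (less_than <*lex*> less_than) (\<lambda>(L,i,k). (i,k))") (simp_all add: wf_inv_image wf_lex_prod)

declare G.simps[simp del]

definition Mj :: "mat \<Rightarrow> nat \<Rightarrow> mat" where
  "Mj L j a b = L a b - (\<Sum>m<j. G L a m * cnj (G L b m))"

lemma G_eq: "G L i k = (if k < i then (if G L k k = 0 then 0 else Mj L k i k / G L k k)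
     else if k = i then complex_of_real (sqrt (Re (Mj L i i i))) else 0)"
  unfolding Mj_def by (subst G.simps) simp

lemma G_diag: "G L k k = complex_of_real (sqrt (Re (Mj L k k k)))"
  by (subst G_eq) simp

lemma G_above: "i < k \<Longrightarrow> G L i k = 0"
  by (subst G_eq) simp

lemma G_below: "k < i \<Longrightarrow> G L i k = (if G L k k = 0 then 0 else Mj L k i k / G L k k)"
  by (subst G_eq) simp

lemma cnj_G_diag: "cnj (G L k k) = G L k k"
  unfolding G_diag by simp

lemma Mj_Suc: "Mj L (Suc j) a b = Mj L j a b - G L a j * cnj (G L b j)"
  unfolding Mj_def sum.lessThan_Suc by (simp only: diff_diff_eq)

lemma Mj_herm: assumes "\<And>a b. L b a = cnj (L a b)" shows "Mj L j b a = cnj (Mj L j a b)"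
proof -
  have "cnj (\<Sum>m<j. G L a m * cnj (G L b m)) = (\<Sum>m<j. G L b m * cnj (G L a m))"
    by (simp only: cnj_sum complex_cnj_mult complex_cnj_cnj mult.commute)
  moreover have "L b a = cnj (L a b)" by (rule assms)
  ultimately show ?thesis unfolding Mj_def complex_cnj_diff by (simp only:)
qed


lemma Q_zero_supp: "(\<And>a. a < n \<Longrightarrow> y a = 0) \<Longrightarrow> Q n M y = 0"
  unfolding Q_def by (intro sum.neutral ballI) simp

lemma Q_rank1_sub:
  "Q n (\<lambda>a b. M a b - u a * cnj (u b)) y = Q n M y - (\<Sum>a<n. cnj (y a) * u a) * cnj (\<Sum>a<n. cnj (y a) * u a)"
proof -
  have "Q n (\<lambda>a b. M a b - u a * cnj (u b)) y = (\<Sum>a<n. \<Sum>b<n. cnj (y a) * M a b * y b - (cnj (y a) * u a) * (cnj (u b) * y b))"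
    unfolding Q_def by (intro sum.cong refl) (simp add: algebra_simps)
  also have "\<dots> = Q n M y - (\<Sum>a<n. cnj (y a) * u a) * (\<Sum>b<n. cnj (u b) * y b)"
    unfolding Q_def by (simp add: sum_subtractf sum_product)
  also have "(\<Sum>b<n. cnj (u b) * y b) = cnj (\<Sum>a<n. cnj (y a) * u a)"
    by (simp add: mult.commute)
  finally show ?thesis .
qed

lemma psd_diag:
  assumes psd: "\<And>y. (\<forall>a<j. y a = 0) \<Longrightarrow> 0 \<le> Re (Q (Suc j) M y)"
    and herm: "M j j = cnj (M j j)"
  shows "M j j = complex_of_real (Re (M j j))" "0 \<le> Re (M j j)"
proof -
  show "M j j = complex_of_real (Re (M j j))" using herm by (simp add: complex_eq_iff)
  show "0 \<le> Re (M j j)"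
    using psd[of "\<lambda>k. 1 * (if k = j then 1 else 0)"] unfolding Q_delta[OF lessI] by simp
qed

lemma psd_zero_offdiag:
  assumes psd: "\<And>y. (\<forall>k<j. y k = 0) \<Longrightarrow> 0 \<le> Re (Q n M y)"
    and jn: "j < n" and an: "a < n" and ja: "j < a"
    and z: "M j j = 0" and hja: "M j a = cnj (M a j)" and ha: "M a a = complex_of_real m" and m: "0 \<le> m"
  shows "M a j = 0"
proof -
  define x where "x = M a j"
  define l where "l = 1 / (m + 1)"
  define r where "r = (cmod x)\<^sup>2"
  have l0: "0 < l" using m by (simp add: l_def)
  define t where "t = - complex_of_real l * x"
  have X: "cnj x * x = complex_of_real r" unfolding r_def by (rule cnj_mult_self)
  have X': "x * cnj x = complex_of_real r" using X by (simp only: mult.commute)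
  have e1: "cnj t * (x * 1) = - complex_of_real l * complex_of_real r"
    unfolding t_def X[symmetric] by simp
  have e2: "t * (cnj 1 * cnj x) = - complex_of_real l * complex_of_real r"
    unfolding t_def X'[symmetric] by simp
  have e3: "cnj t * t = complex_of_real (l * l) * complex_of_real r"
    unfolding t_def X[symmetric] by simp
  have "0 \<le> Re (Q n M (\<lambda>k. 1 * (if k = j then 1 else 0) + t * (if k = a then 1 else 0)))"
    by (rule psd) (use ja in auto)
  also have "Q n M (\<lambda>k. 1 * (if k = j then 1 else 0) + t * (if k = a then 1 else 0)) =
      cnj 1 * 1 * 0 + cnj t * (x * 1) + t * (cnj 1 * cnj x) + cnj t * t * complex_of_real m"
    unfolding Q_two[OF jn an] z hja ha x_def ..
  also have "\<dots> = complex_of_real (r * (l * l * m - 2 * l))"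
    unfolding e1 e2 e3 of_real_mult[symmetric] of_real_minus[symmetric] of_real_add[symmetric]
    by (simp only: of_real_eq_iff mult_zero_right add_0_left) (simp add: algebra_simps)
  finally have h: "0 \<le> r * (l * l * m - 2 * l)" by simp
  have "l * m < 1" using m by (simp add: l_def field_simps)
  then have "l * (l * m) < l * 2" using l0 by (intro mult_strict_left_mono) simp_all
  then have neg: "l * l * m - 2 * l < 0" by (simp add: algebra_simps)
  have "r \<le> 0"
  proof (rule ccontr)
    assume "\<not> r \<le> 0"
    then have "r * (l * l * m - 2 * l) < 0" using neg by (simp add: mult_pos_neg)
    then show False using h by simp
  qed
  then show ?thesis unfolding x_def r_def by simp
qed

context
  fixes L :: mat
  assumes herm: "\<And>a b. L b a = cnj (L a b)"
    and psd0: "\<And>n y. 0 \<le> Re (Q n L y)"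
begin

lemma psd_Mj: "(\<forall>a<j. y a = 0) \<Longrightarrow> 0 \<le> Re (Q n (Mj L j) y)"
proof (induct j arbitrary: n y)
  case 0
  have "Mj L 0 = L" by (intro ext) (simp add: Mj_def)
  then show ?case using psd0 by simp
next
  case (Suc j)
  let ?M = "Mj L j"
  let ?g = "G L j j"
  have hM: "\<And>a b. ?M b a = cnj (?M a b)" by (rule Mj_herm[OF herm])
  have dg: "?M j j = complex_of_real (Re (?M j j))" "0 \<le> Re (?M j j)"
    by (rule psd_diag[where j=j, OF Suc.hyps hM[of j j]], simp)+
  have gg: "?g * ?g = ?M j j"
    by (subst dg(1)) (simp add: G_diag dg(2) of_real_mult[symmetric] del: of_real_mult)
  have e1: "Mj L (Suc j) = (\<lambda>a b. ?M a b - G L a j * cnj (G L b j))"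
    by (intro ext) (simp add: Mj_Suc)
  let ?p = "\<Sum>a<n. cnj (y a) * G L a j"
  have Qs: "Q n (Mj L (Suc j)) y = Q n ?M y - ?p * cnj ?p"
    unfolding e1 by (rule Q_rank1_sub)
  have yj: "\<And>a. a \<le> j \<Longrightarrow> y a = 0" using Suc.prems by auto
  show ?case
  proof (cases "n \<le> j")
    case True
    then show ?thesis using yj by (simp add: Q_zero_supp)
  next
    case False
    then have jn: "j < n" by simp
    show ?thesis
    proof (cases "?g = 0")
      case True
      have "cnj (y a) * G L a j = 0" for a
        by (cases "a \<le> j") (simp_all add: yj G_below True)
      then have "?p = 0" by (intro sum.neutral ballI)
      then show ?thesis unfolding Qs using Suc.hyps[of y n] Suc.prems by simp
    next
      case False
      let ?w = "\<Sum>b<n. ?M j b * y b"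
      let ?c = "\<Sum>a<n. cnj (y a) * ?M a j"
      have pc: "?p = ?c / ?g"
      proof -
        have "cnj (y a) * G L a j = cnj (y a) * ?M a j / ?g" for a
          by (cases "a \<le> j") (simp_all add: yj G_below False)
        then show ?thesis by (simp add: sum_divide_distrib)
      qed
      have cw: "?c = cnj ?w"
      proof -
        have "cnj (y a) * ?M a j = cnj (?M j a * y a)" for a
          using hM[of a j] by (simp only: complex_cnj_mult mult.commute)
        then show ?thesis by (simp only: cnj_sum)
      qed
      define t where "t = - ?w / (?g * ?g)"
      have "0 \<le> Re (Q n ?M (\<lambda>k. y k + t * (if k = j then 1 else 0)))"
        by (rule Suc.hyps) (use Suc.prems in auto)
      also have "Q n ?M (\<lambda>k. y k + t * (if k = j then 1 else 0)) = Q n ?M y - ?p * cnj ?p"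
      proof -
        have cg: "cnj ?g = ?g" by (rule cnj_G_diag)
        have "Q n ?M (\<lambda>k. y k + t * (if k = j then 1 else 0)) =
            Q n ?M y + cnj t * ?w + t * ?c + cnj t * t * (?g * ?g)"
          unfolding Q_expand[OF jn] gg ..
        also have "\<dots> = Q n ?M y - ?p * cnj ?p"
          unfolding pc cw t_def using False cg by (simp add: field_simps)
        finally show ?thesis .
      qed
      finally show ?thesis unfolding Qs .
    qed
  qed
qed

lemma Mj_diag: "Mj L j j j = complex_of_real (Re (Mj L j j j))" "0 \<le> Re (Mj L j j j)"
  by (rule psd_diag[where j=j, OF psd_Mj Mj_herm[OF herm]], simp)+

lemma G_sq: "G L j j * G L j j = Mj L j j j"
  by (subst Mj_diag(1)) (simp add: G_diag Mj_diag(2) of_real_mult[symmetric] del: of_real_mult)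

lemma Mj_diag_ge: assumes "j \<le> a"
  shows "Mj L j a a = complex_of_real (Re (Mj L j a a))" "0 \<le> Re (Mj L j a a)"
proof -
  have p: "0 \<le> Re (Q (Suc a) (Mj L j) y)" if "\<forall>k<a. y k = 0" for y
    by (rule psd_Mj) (use that assms in auto)
  show "Mj L j a a = complex_of_real (Re (Mj L j a a))" "0 \<le> Re (Mj L j a a)"
    by (rule psd_diag[where j=a, OF p Mj_herm[OF herm]], assumption)+
qed

lemma Mj_Suc_zero: "j \<le> a \<Longrightarrow> Mj L (Suc j) a j = 0"
proof -
  assume ja: "j \<le> a"
  show ?thesis
  proof (cases "a = j")
    case True then show ?thesis by (simp add: Mj_Suc cnj_G_diag G_sq)
  next
    case False
    then have ja': "j < a" using ja by simp
    show ?thesis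
    proof (cases "G L j j = 0")
      case False
      then show ?thesis by (simp add: Mj_Suc cnj_G_diag G_below[OF ja'])
    next
      case True
      have z: "Mj L j j j = 0" using G_sq[symmetric] True by simp
      have "Mj L j a j = 0"
        by (rule psd_zero_offdiag[where n="Suc a" and m="Re (Mj L j a a)", OF psd_Mj _ _ ja' z
            Mj_herm[OF herm] Mj_diag_ge(1)[OF ja] Mj_diag_ge(2)[OF ja]]) (use ja in simp_all)
      then show ?thesis by (simp add: Mj_Suc True)
    qed
  qed
qed


lemma L_gram_ge: "j \<le> a \<Longrightarrow> L a j = (\<Sum>m<Suc j. G L a m * cnj (G L j m))"
  using Mj_Suc_zero[of j a] unfolding Mj_def by simp

lemma sum_G_ext:
  assumes "b < N'" "N' \<le> N"
  shows "(\<Sum>m<N. G L a m * cnj (G L b m)) = (\<Sum>m<N'. G L a m * cnj (G L b m))"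
proof (rule sum.mono_neutral_right)
  show "\<forall>i\<in>{..<N} - {..<N'}. G L a i * cnj (G L b i) = 0"
    using assms by (auto simp: G_above)
qed (use assms in auto)

lemma L_gram: assumes "max a b < N" shows "L a b = (\<Sum>m<N. G L a m * cnj (G L b m))"
proof (cases "b \<le> a")
  case True
  then show ?thesis using L_gram_ge[OF True] sum_G_ext[of b "Suc b" N a] assms by simp
next
  case False
  then have ab: "a \<le> b" by simp
  have "L a b = cnj (L b a)" by (rule herm)
  also have "L b a = (\<Sum>m<N. G L b m * cnj (G L a m))"
    using L_gram_ge[OF ab] sum_G_ext[of a "Suc a" N b] assms by simp
  also have "cnj \<dots> = (\<Sum>m<N. G L a m * cnj (G L b m))"
    by (simp only: cnj_sum complex_cnj_mult complex_cnj_cnj mult.commute)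
  finally show ?thesis .
qed

lemma L_diag_gram: "i < N \<Longrightarrow> L i i = complex_of_real (\<Sum>m<N. (cmod (G L i m))\<^sup>2)"
proof -
  assume "i < N"
  then have "L i i = (\<Sum>m<N. G L i m * cnj (G L i m))" using L_gram[of i i N] by simp
  also have "\<dots> = (\<Sum>m<N. complex_of_real ((cmod (G L i m))\<^sup>2))"
    by (simp only: complex_norm_square)
  also have "\<dots> = complex_of_real (\<Sum>m<N. (cmod (G L i m))\<^sup>2)"
    by (simp only: of_real_sum)
  finally show ?thesis .
qed

lemma G_sq_le: "(cmod (G L i k))\<^sup>2 \<le> Re (L i i)"
proof -
  have "Re (L i i) = (\<Sum>m<Suc (max i k). (cmod (G L i m))\<^sup>2)"
    using L_diag_gram[of i "Suc (max i k)"] by simp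
  moreover have "(cmod (G L i k))\<^sup>2 \<le> (\<Sum>m<Suc (max i k). (cmod (G L i m))\<^sup>2)"
    by (rule member_le_sum) auto
  ultimately show ?thesis by simp
qed

lemma G_rowsum_le: "(\<Sum>k<K. (cmod (G L i k))\<^sup>2) \<le> Re (L i i)"
proof -
  have "Re (L i i) = (\<Sum>m<max K (Suc i). (cmod (G L i m))\<^sup>2)"
    using L_diag_gram[of i "max K (Suc i)"] by simp
  moreover have "(\<Sum>k<K. (cmod (G L i k))\<^sup>2) \<le> (\<Sum>m<max K (Suc i). (cmod (G L i m))\<^sup>2)"
    by (rule sum_mono2) auto
  ultimately show ?thesis by simp
qed

lemma psd_nuclear:
  assumes sd: "summable (\<lambda>i. Re (L i i))"
  shows "nuclear_rep L (\<lambda>k i. G L i k) (\<lambda>k i. G L i k)"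
  unfolding nuclear_rep_def
proof (intro conjI allI)
  have d0: "0 \<le> Re (L i i)" for i using G_sq_le[of i i] by (meson order_trans zero_le_power2)
  have sk: "summable (\<lambda>i. (cmod (G L i k))\<^sup>2)" for k
    by (rule summable_comparison_test[OF _ sd]) (auto intro: G_sq_le)
  show "ell2 (\<lambda>i. G L i k)" for k unfolding ell2_def by (rule sk)
  then show "ell2 (\<lambda>i. G L i k)" for k .
  have vv: "vnorm (\<lambda>i. G L i k) * vnorm (\<lambda>i. G L i k) = (\<Sum>i. (cmod (G L i k))\<^sup>2)" for k
    unfolding vnorm_def using suminf_nonneg[OF sk[of k]] by simp
  show "summable (\<lambda>k. vnorm (\<lambda>i. G L i k) * vnorm (\<lambda>i. G L i k))"
    unfolding vv
  proof (rule summableI_nonneg_bounded[of _ "\<Sum>i. Re (L i i)"])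
    fix K
    have "(\<Sum>k<K. \<Sum>i. (cmod (G L i k))\<^sup>2) = (\<Sum>i. \<Sum>k<K. (cmod (G L i k))\<^sup>2)"
      by (rule suminf_sum[symmetric]) (rule sk)
    also have "\<dots> \<le> (\<Sum>i. Re (L i i))"
      by (rule suminf_le) (auto intro: G_rowsum_le summable_sum sk sd)
    finally show "(\<Sum>k<K. \<Sum>i. (cmod (G L i k))\<^sup>2) \<le> (\<Sum>i. Re (L i i))" .
  qed (simp add: suminf_nonneg sk)
next
  fix i j
  have "(\<lambda>k. G L i k * cnj (G L j k)) sums (\<Sum>k\<in>{..<Suc (max i j)}. G L i k * cnj (G L j k))"
    by (rule sums_finite) (auto simp: G_above)
  then show "(\<lambda>k. G L i k * cnj (G L j k)) sums L i j"
    using L_gram[of i j "Suc (max i j)"] by simp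
qed

lemma psd_zero_diag: assumes "\<And>i. L i i = 0" shows "L a b = 0"
proof -
  have "(\<Sum>m<Suc i. (cmod (G L i m))\<^sup>2) = 0" for i
  proof -
    have "complex_of_real (\<Sum>m<Suc i. (cmod (G L i m))\<^sup>2) = 0"
      using L_diag_gram[of i "Suc i"] assms[of i] by simp
    then show ?thesis by (simp only: of_real_eq_0_iff)
  qed
  then have "G L i m = 0" if "m < Suc i" for i m
  proof -
    have "\<forall>x\<in>{..<Suc i}. (cmod (G L i x))\<^sup>2 = 0"
      using sum_nonneg_eq_0_iff[of "{..<Suc i}" "\<lambda>m. (cmod (G L i m))\<^sup>2"]
        \<open>\<And>i. (\<Sum>m<Suc i. (cmod (G L i m))\<^sup>2) = 0\<close>[of i] by simp
    then show ?thesis using that by simp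
  qed
  then have g: "G L i m = 0" for i m by (cases "m < Suc i") (auto simp: G_above)
  show ?thesis using L_gram[of a b "Suc (max a b)"] by (simp add: g)
qed

end

lemma cs_scalar:
  fixes p r :: real and q :: complex
  assumes h: "\<And>t. 0 \<le> p + 2 * Re (t * q) + (cmod t)\<^sup>2 * r" and r: "0 \<le> r"
  shows "(cmod q)\<^sup>2 \<le> p * r"
proof (cases "r = 0")
  case True
  show ?thesis
  proof (cases "q = 0")
    case True then show ?thesis using h[of 0] r by simp
  next
    case False
    define l where "l = (\<bar>p\<bar> + 1) / (2 * (cmod q)\<^sup>2)"
    have qq: "0 < (cmod q)\<^sup>2" using False by simp
    have "Re (- (complex_of_real l * cnj q) * q) = - l * (cmod q)\<^sup>2"
      using cmod_power2[of q] by (simp add: power2_eq_square algebra_simps)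
    then have "0 \<le> p - 2 * (l * (cmod q)\<^sup>2)" using h[of "- (complex_of_real l * cnj q)"] True by simp
    also have "l * (cmod q)\<^sup>2 = (\<bar>p\<bar> + 1) / 2" unfolding l_def using qq by simp
    finally show ?thesis by simp
  qed
next
  case False
  then have r0: "0 < r" using r by simp
  define t where "t = - cnj q / complex_of_real r"
  have "0 \<le> p + 2 * Re (t * q) + (cmod t)\<^sup>2 * r" by (rule h)
  also have "Re (t * q) = - (cmod q)\<^sup>2 / r"
    unfolding t_def by (simp add: cnj_mult_self mult.commute[of "cnj q"])
  also have "(cmod t)\<^sup>2 * r = (cmod q)\<^sup>2 / r"
    unfolding t_def using r0 by (simp add: norm_divide power_divide power2_eq_square)
  finally have "0 \<le> p - (cmod q)\<^sup>2 / r" by simp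
  then show ?thesis using r0 by (simp add: field_simps)
qed

context
  fixes \<Omega> :: "mat \<Rightarrow> mat"
  assumes qc: "quantum_channel \<Omega>" and sb: "superop_between_0_1 \<Omega>"
begin

lemma qc_parts:
  "\<forall>A. trace_class A \<longrightarrow> trace_class (\<Omega> A)"
  "\<forall>A B c. trace_class A \<longrightarrow> trace_class B \<longrightarrow>
        \<Omega> (\<lambda>i j. A i j + c * B i j) = (\<lambda>i j. \<Omega> A i j + c * \<Omega> B i j)"
  "\<forall>A. trace_class A \<longrightarrow> trace (\<Omega> A) = trace A"
  "\<forall>n X. (\<forall>a<n. \<forall>b<n. trace_class (X a b)) \<longrightarrow> block_pos n X \<longrightarrow>
        block_pos n (\<lambda>a b. \<Omega> (X a b))"
  using qc unfolding quantum_channel_def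
  by (fact conjunct1, fact conjunct1[OF conjunct2], fact conjunct1[OF conjunct2[OF conjunct2]],
      fact conjunct2[OF conjunct2[OF conjunct2]])

lemma tcO: "trace_class A \<Longrightarrow> trace_class (\<Omega> A)"
  using qc_parts(1) by simp

lemma linO: "trace_class A \<Longrightarrow> trace_class B \<Longrightarrow>
    \<Omega> (\<lambda>i j. A i j + c * B i j) = (\<lambda>i j. \<Omega> A i j + c * \<Omega> B i j)"
  using qc_parts(2) by simp

lemma trO: "trace_class A \<Longrightarrow> trace (\<Omega> A) = trace A"
  using qc_parts(3) by simp

lemma posO: assumes "trace_class A" "pos_op A" shows "pos_op (\<Omega> A)"
proof -
  have "block_pos 1 (\<lambda>a b. A)" unfolding block_pos_1 by (rule assms(2))
  then have "block_pos 1 (\<lambda>a b. \<Omega> A)"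
    using qc_parts(4) assms(1) by simp
  then show ?thesis unfolding block_pos_1 .
qed

lemma O_zero: "\<Omega> (\<lambda>i j. 0) = (\<lambda>i j. 0)"
proof -
  have "\<Omega> (\<lambda>i j. 0 + 1 * 0) = (\<lambda>i j. \<Omega> (\<lambda>i j. 0) i j + 1 * \<Omega> (\<lambda>i j. 0) i j)"
    by (rule linO[OF tc_zero tc_zero])
  then have "\<And>i j. \<Omega> (\<lambda>i j. 0) i j = \<Omega> (\<lambda>i j. 0) i j + \<Omega> (\<lambda>i j. 0) i j"
    by (simp add: fun_eq_iff)
  then show ?thesis by (intro ext) simp
qed

lemma O_scale: "trace_class A \<Longrightarrow> \<Omega> (\<lambda>i j. c * A i j) = (\<lambda>i j. c * \<Omega> A i j)"
  using linO[OF tc_zero, of A c] by (simp add: O_zero)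

definition F :: "mat \<Rightarrow> mat \<Rightarrow> complex" where
  "F A B = hs_inner A (\<Omega> B)"

lemma F_diag: "trace_class A \<Longrightarrow> F A A \<in> \<real> \<and> 0 \<le> Re (F A A) \<and> Re (F A A) \<le> hsq A"
proof -
  assume "trace_class A"
  then show ?thesis using sb unfolding superop_between_0_1_def F_def hs_norm_sq by simp
qed

lemma F_expand:
  assumes x: "trace_class x" and y: "trace_class y"
  shows "F (\<lambda>i j. x i j + t * y i j) (\<lambda>i j. x i j + t * y i j) =
      F x x + t * F x y + cnj t * F y x + cnj t * t * F y y"
proof -
  have hx: "hs x" "hs y" "hs (\<Omega> x)" "hs (\<Omega> y)" using x y tcO tc_hs by blast+
  have hc: "hs (\<lambda>i j. \<Omega> x i j + t * \<Omega> y i j)" by (rule hs_comb[OF hx(3,4)])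
  have "F (\<lambda>i j. x i j + t * y i j) (\<lambda>i j. x i j + t * y i j)
      = hs_inner (\<lambda>i j. x i j + t * y i j) (\<lambda>i j. \<Omega> x i j + t * \<Omega> y i j)"
    unfolding F_def linO[OF x y] ..
  also have "\<dots> = hs_inner x (\<lambda>i j. \<Omega> x i j + t * \<Omega> y i j) + cnj t * hs_inner y (\<lambda>i j. \<Omega> x i j + t * \<Omega> y i j)"
    by (rule hs_inner_comb_left[OF hc hx(1,2)])
  also have "\<dots> = F x x + t * F x y + cnj t * (F y x + t * F y y)"
    unfolding F_def hs_inner_comb_right[OF hx(1,3,4)] hs_inner_comb_right[OF hx(2,3,4)] ..
  finally show ?thesis by (simp add: algebra_simps)
qed

lemma F_herm:
  assumes x: "trace_class x" and y: "trace_class y"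
  shows "F y x = cnj (F x y)"
proof -
  have r: "F (\<lambda>i j. x i j + t * y i j) (\<lambda>i j. x i j + t * y i j) \<in> \<real>" for t
    using F_diag[OF tc_comb[OF x y]] by blast
  have dx: "Im (F x x) = 0" "Im (F y y) = 0" using F_diag[OF x] F_diag[OF y]
    by (auto simp: complex_is_Real_iff)
  have "Im (F x x + 1 * F x y + cnj 1 * F y x + cnj 1 * 1 * F y y) = 0"
    using r[of 1] unfolding F_expand[OF x y] by (simp only: complex_is_Real_iff)
  then have i1: "Im (F x y) + Im (F y x) = 0" using dx by simp
  have "Im (F x x + \<i> * F x y + cnj \<i> * F y x + cnj \<i> * \<i> * F y y) = 0"
    using r[of \<i>] unfolding F_expand[OF x y] by (simp only: complex_is_Real_iff)
  then have i2: "Re (F x y) - Re (F y x) = 0" using dx by simp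
  show ?thesis using i1 i2 by (simp add: complex_eq_iff)
qed

lemma F_cs:
  assumes x: "trace_class x" and y: "trace_class y"
  shows "(cmod (F x y))\<^sup>2 \<le> Re (F x x) * Re (F y y)"
proof (rule cs_scalar)
  show "0 \<le> Re (F y y)" using F_diag[OF y] by blast
  fix t
  have "0 \<le> Re (F (\<lambda>i j. x i j + t * y i j) (\<lambda>i j. x i j + t * y i j))"
    using F_diag[OF tc_comb[OF x y]] by blast
  also have "\<dots> = Re (F x x) + 2 * Re (t * F x y) + (cmod t)\<^sup>2 * Re (F y y)"
  proof -
    have "Re (cnj t * F y x) = Re (t * F x y)"
      unfolding F_herm[OF x y] complex_cnj_mult[symmetric] by simp
    moreover have "Re (cnj t * t * F y y) = (cmod t)\<^sup>2 * Re (F y y)"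
      using F_diag[OF y] by (simp add: cnj_mult_self complex_is_Real_iff)
    ultimately show ?thesis unfolding F_expand[OF x y] by simp
  qed
  finally show "0 \<le> Re (F x x) + 2 * Re (t * F x y) + (cmod t)\<^sup>2 * Re (F y y)" .
qed

lemma contraction:
  assumes x: "trace_class x"
  shows "hsq (\<Omega> x) \<le> Re (F x x)"
proof -
  have ox: "trace_class (\<Omega> x)" by (rule tcO[OF x])
  have e: "F (\<Omega> x) x = complex_of_real (hsq (\<Omega> x))"
    unfolding F_def by (rule hs_inner_self[OF tc_hs[OF ox]])
  have "(hsq (\<Omega> x))\<^sup>2 \<le> Re (F (\<Omega> x) (\<Omega> x)) * Re (F x x)"
    using F_cs[OF ox x] unfolding e by (simp add: hsq_nonneg)
  also have "\<dots> \<le> hsq (\<Omega> x) * Re (F x x)"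
    using F_diag[OF ox] F_diag[OF x] by (intro mult_right_mono) auto
  finally have h: "hsq (\<Omega> x) * hsq (\<Omega> x) \<le> hsq (\<Omega> x) * Re (F x x)" by (simp add: power2_eq_square)
  show ?thesis
  proof (cases "hsq (\<Omega> x) = 0")
    case True then show ?thesis using F_diag[OF x] by simp
  next
    case False
    then have "0 < hsq (\<Omega> x)" using hsq_nonneg[of "\<Omega> x"] by simp
    then show ?thesis using h by simp
  qed
qed

end

context
  fixes \<Omega> :: "mat \<Rightarrow> mat" and \<sigma> :: mat
  assumes qc: "quantum_channel \<Omega>" and sb: "superop_between_0_1 \<Omega>" and dens: "density \<sigma>"
begin

definition xs :: "nat \<Rightarrow> mat" where "xs N = (\<Omega> ^^ N) \<sigma>"

lemma xs_Suc: "xs (Suc N) = \<Omega> (xs N)" unfolding xs_def by simp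

lemma xs_props: "trace_class (xs N) \<and> pos_op (xs N) \<and> trace (xs N) = 1"
proof (induct N)
  case 0 then show ?case using dens by (simp add: xs_def density_def)
next
  case (Suc N)
  then show ?case unfolding xs_Suc
    using tcO[OF qc sb] posO[OF qc sb] trO[OF qc sb] by simp
qed

lemma xs_tc: "trace_class (xs N)" using xs_props by blast
lemma xs_pos: "pos_op (xs N)" using xs_props by blast
lemma xs_tr: "trace (xs N) = 1" using xs_props by blast
lemma xs_hs: "hs (xs N)" by (rule tc_hs[OF xs_tc])

definition A :: "nat \<Rightarrow> complex" where "A s = hs_inner \<sigma> (xs s)"

lemma inner_shift1: "hs_inner (xs (Suc N)) (xs M) = hs_inner (xs N) (xs (Suc M))"
proof -
  have "hs_inner (xs (Suc N)) (xs M) = cnj (hs_inner (xs M) (xs (Suc N)))" by (rule hs_inner_cnj)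
  also have "hs_inner (xs M) (xs (Suc N)) = F \<Omega> (xs M) (xs N)" unfolding F_def[OF qc sb] xs_Suc ..
  also have "cnj \<dots> = F \<Omega> (xs N) (xs M)"
    using F_herm[OF qc sb xs_tc xs_tc, of N M] by simp
  also have "\<dots> = hs_inner (xs N) (xs (Suc M))" unfolding F_def[OF qc sb] xs_Suc ..
  finally show ?thesis .
qed

lemma inner_shift: "hs_inner (xs N) (xs M) = A (N + M)"
proof (induct N arbitrary: M)
  case 0 then show ?case by (simp add: A_def xs_def)
next
  case (Suc N)
  then show ?case using inner_shift1[of N M] Suc[of "Suc M"] by simp
qed

definition b :: "nat \<Rightarrow> real" where "b s = Re (A s)"

lemma A_even: "A (2 * m) = complex_of_real (hsq (xs m))"
  using inner_shift[of m m] hs_inner_self[OF xs_hs, of m] by (simp add: mult_2)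

lemma A_odd: "A (2 * m + 1) = F \<Omega> (xs m) (xs m)"
  using inner_shift[of m "Suc m"] by (simp add: F_def[OF qc sb] xs_Suc mult_2)

lemma A_real: "A s = complex_of_real (b s)"
proof (cases "even s")
  case True
  then obtain m where "s = 2 * m" by blast
  then show ?thesis by (simp add: b_def A_even)
next
  case False
  then obtain m where s: "s = 2 * m + 1" using oddE by blast
  have "F \<Omega> (xs m) (xs m) \<in> \<real>" using F_diag[OF qc sb xs_tc] by blast
  then show ?thesis unfolding s b_def A_odd by (simp add: complex_is_Real_iff complex_eq_iff)
qed

lemma b_nonneg: "0 \<le> b s"
proof (cases "even s")
  case True
  then obtain m where "s = 2 * m" by blast
  then show ?thesis by (simp add: b_def A_even hsq_nonneg)
next
  case False
  then obtain m where s: "s = 2 * m + 1" using oddE by blast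
  show ?thesis unfolding s b_def A_odd using F_diag[OF qc sb xs_tc] by blast
qed

lemma b_dec: "b (Suc s) \<le> b s"
proof (cases "even s")
  case True
  then obtain m where s: "s = 2 * m" by blast
  show ?thesis unfolding s b_def using F_diag[OF qc sb xs_tc, of m]
    by (simp add: A_even A_odd[simplified])
next
  case False
  then obtain m where s: "s = 2 * m + 1" using oddE by blast
  have "Suc s = 2 * Suc m" using s by simp
  then have "b (Suc s) = Re (A (2 * Suc m))" by (simp only: b_def)
  also have "\<dots> = hsq (\<Omega> (xs m))" by (simp only: A_even xs_Suc Re_complex_of_real)
  finally have "b (Suc s) = hsq (\<Omega> (xs m))" .
  also have "\<dots> \<le> Re (F \<Omega> (xs m) (xs m))" by (rule contraction[OF qc sb xs_tc])
  also have "\<dots> = b s" unfolding s b_def A_odd ..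
  finally show ?thesis .
qed

lemma b_conv: obtains \<beta> where "b \<longlonglongrightarrow> \<beta>" "\<And>s. \<beta> \<le> b s"
proof -
  have "decseq b" by (rule decseq_SucI) (rule b_dec)
  then obtain \<beta> where "b \<longlonglongrightarrow> \<beta>" "\<forall>i. \<beta> \<le> b i"
    using decseq_convergent[of b 0] b_nonneg by blast
  then show ?thesis using that by blast
qed

lemma dist_formula: "hsq (mdiff (xs N) (xs M)) = b (2 * N) + b (2 * M) - 2 * b (N + M)"
proof -
  let ?d = "mdiff (xs N) (xs M)"
  have d: "?d = (\<lambda>i j. xs N i j + (-1) * xs M i j)" by (simp add: mdiff_def)
  have hd: "hs ?d" by (rule hs_mdiff[OF xs_hs xs_hs])
  have e0: "complex_of_real (hsq ?d) = hs_inner ?d ?d" by (rule hs_inner_self[OF hd, symmetric])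
  have e1: "hs_inner ?d ?d = hs_inner (xs N) ?d - hs_inner (xs M) ?d"
    using hs_inner_comb_left[OF hd xs_hs xs_hs, of N "-1" M] unfolding d[symmetric] by simp
  have e2: "hs_inner (xs N) ?d = hs_inner (xs N) (xs N) - hs_inner (xs N) (xs M)"
    using hs_inner_comb_right[OF xs_hs xs_hs xs_hs, of N N "-1" M] unfolding d[symmetric] by simp
  have e3: "hs_inner (xs M) ?d = hs_inner (xs M) (xs N) - hs_inner (xs M) (xs M)"
    using hs_inner_comb_right[OF xs_hs xs_hs xs_hs, of M N "-1" M] unfolding d[symmetric] by simp
  have "complex_of_real (hsq ?d) = A (N+N) - A (N+M) - (A (M+N) - A (M+M))"
    unfolding e0 e1 e2 e3 inner_shift ..
  also have "\<dots> = complex_of_real (b (2 * N) + b (2 * M) - 2 * b (N + M))"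
    unfolding A_real mult_2 by (simp add: add.commute)
  finally show ?thesis by (simp only: of_real_eq_iff)
qed

lemma cauchy_hsq: "0 < e \<Longrightarrow> \<exists>K. \<forall>N\<ge>K. \<forall>M\<ge>K. hsq (mdiff (xs N) (xs M)) < e"
proof -
  assume e: "0 < e"
  obtain \<beta> where bc: "b \<longlonglongrightarrow> \<beta>" and bl: "\<And>s. \<beta> \<le> b s" using b_conv by blast
  obtain K where K: "\<And>s. s \<ge> K \<Longrightarrow> b s < \<beta> + e / 2"
  proof -
    have "\<forall>\<^sub>F s in sequentially. dist (b s) \<beta> < e / 2"
      using bc[unfolded tendsto_iff, rule_format, of "e/2"] e by simp
    then obtain K where K0: "\<And>s. s \<ge> K \<Longrightarrow> dist (b s) \<beta> < e / 2"
      unfolding eventually_sequentially by blast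
    show ?thesis
    proof (rule that)
      fix s assume "s \<ge> K"
      from K0[OF this] have "\<bar>b s - \<beta>\<bar> < e / 2" by (simp only: dist_real_def)
      then show "b s < \<beta> + e / 2" using abs_less_iff[of "b s - \<beta>" "e/2"] by linarith
    qed
  qed
  show ?thesis
  proof (intro exI allI impI)
    fix N M assume "K \<le> N" "K \<le> M"
    then have "b (2 * N) < \<beta> + e / 2" "b (2 * M) < \<beta> + e / 2" using K by simp_all
    then show "hsq (mdiff (xs N) (xs M)) < e" unfolding dist_formula using bl[of "N + M"] by simp
  qed
qed


lemma entry_cauchy: "Cauchy (\<lambda>N. xs N i j)"
  unfolding Cauchy_def
proof (intro allI impI)
  fix e :: real assume e: "0 < e"
  obtain K where K: "\<And>N M. N \<ge> K \<Longrightarrow> M \<ge> K \<Longrightarrow> hsq (mdiff (xs N) (xs M)) < e\<^sup>2"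
    using cauchy_hsq[of "e\<^sup>2"] e by auto
  show "\<exists>K. \<forall>m\<ge>K. \<forall>n\<ge>K. dist (xs m i j) (xs n i j) < e"
  proof (intro exI allI impI)
    fix m n assume mn: "K \<le> m" "K \<le> n"
    have "dist (xs m i j) (xs n i j) = cmod (mdiff (xs m) (xs n) i j)"
      by (simp add: dist_norm mdiff_def)
    also have "\<dots> \<le> hs_norm (mdiff (xs m) (xs n))" by (rule hs_entry'[OF hs_mdiff[OF xs_hs xs_hs]])
    also have "\<dots> < sqrt (e\<^sup>2)" unfolding hs_norm_eq by (rule real_sqrt_less_mono[OF K[OF mn]])
    also have "\<dots> = e" using e by simp
    finally show "dist (xs m i j) (xs n i j) < e" .
  qed
qed

definition Lm :: mat where "Lm i j = lim (\<lambda>N. xs N i j)"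

lemma Lm_lim: "(\<lambda>N. xs N i j) \<longlonglongrightarrow> Lm i j"
  unfolding Lm_def using entry_cauchy Cauchy_convergent_iff convergent_LIMSEQ_iff by blast

lemma sqm_mdiff: "sqm (mdiff X Y) p = (cmod (X (fst p) (snd p) - Y (fst p) (snd p)))\<^sup>2"
  by (simp add: sqm_def mdiff_def split_def)

lemma hs_conv: "0 < e \<Longrightarrow> \<exists>K. \<forall>N\<ge>K. hs (mdiff (xs N) Lm) \<and> hsq (mdiff (xs N) Lm) \<le> e"
proof -
  assume e: "0 < e"
  obtain K where K: "\<And>N M. N \<ge> K \<Longrightarrow> M \<ge> K \<Longrightarrow> hsq (mdiff (xs N) (xs M)) < e"
    using cauchy_hsq[OF e] by auto
  show ?thesis
  proof (intro exI allI impI)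
    fix N assume N: "K \<le> N"
    have fin: "sum (sqm (mdiff (xs N) Lm)) F \<le> e" if F: "finite F" for F
    proof -
      have "(\<lambda>M. sum (sqm (mdiff (xs N) (xs M))) F) \<longlonglongrightarrow> sum (sqm (mdiff (xs N) Lm)) F"
        unfolding sqm_mdiff by (intro tendsto_intros Lm_lim)
      moreover have "\<exists>K'. \<forall>M\<ge>K'. sum (sqm (mdiff (xs N) (xs M))) F \<le> e"
      proof (intro exI allI impI)
        fix M assume "K \<le> M"
        have "sum (sqm (mdiff (xs N) (xs M))) F \<le> hsq (mdiff (xs N) (xs M))"
          by (rule hs_fin[OF hs_mdiff[OF xs_hs xs_hs] F])
        also have "\<dots> < e" using K[OF N \<open>K \<le> M\<close>] .
        finally show "sum (sqm (mdiff (xs N) (xs M))) F \<le> e" by simp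
      qed
      ultimately show ?thesis by (rule LIMSEQ_le_const2)
    qed
    show "hs (mdiff (xs N) Lm) \<and> hsq (mdiff (xs N) Lm) \<le> e"
      using hs_intro[OF fin] by blast
  qed
qed

lemma hs_Lm: "hs Lm"
proof -
  obtain K where K: "hs (mdiff (xs K) Lm)" using hs_conv[of 1] by auto
  have "Lm = (\<lambda>i j. xs K i j + (-1) * mdiff (xs K) Lm i j)" by (simp add: mdiff_def)
  then show ?thesis using hs_comb[OF xs_hs K] by metis
qed

lemma hs_diff_Lm: "hs (mdiff (xs N) Lm)" by (rule hs_mdiff[OF xs_hs hs_Lm])

lemma hsq_conv: "(\<lambda>N. hsq (mdiff (xs N) Lm)) \<longlonglongrightarrow> 0"
  unfolding LIMSEQ_iff
proof (intro allI impI)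
  fix r :: real assume r: "0 < r"
  obtain K where K: "\<And>N. N \<ge> K \<Longrightarrow> hsq (mdiff (xs N) Lm) \<le> r / 2"
    using hs_conv[of "r/2"] r by auto
  show "\<exists>no. \<forall>n\<ge>no. norm (hsq (mdiff (xs n) Lm) - 0) < r"
  proof (intro exI allI impI)
    fix n assume "K \<le> n"
    then show "norm (hsq (mdiff (xs n) Lm) - 0) < r" using K[of n] r hsq_nonneg[of "mdiff (xs n) Lm"] by simp
  qed
qed

lemma hsn_conv: "(\<lambda>N. hs_norm (mdiff (xs N) Lm)) \<longlonglongrightarrow> 0"
  unfolding hs_norm_eq using tendsto_real_sqrt[OF hsq_conv] by simp

lemma quad_conv:
  assumes y: "ell2 y"
  shows "(\<lambda>N. vinner y (mv (xs N) y)) \<longlonglongrightarrow> vinner y (mv Lm y)"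
proof -
  have e: "vinner y (mv (mdiff (xs N) Lm) y) = vinner y (mv (xs N) y) - vinner y (mv Lm y)" for N
  proof -
    have "mdiff (xs N) Lm = (\<lambda>i j. xs N i j + (-1) * Lm i j)" by (simp add: mdiff_def)
    then show ?thesis using vinner_mv_comb[OF xs_hs hs_Lm y y, of N "-1"] by simp
  qed
  have "(\<lambda>N. vinner y (mv (mdiff (xs N) Lm) y)) \<longlonglongrightarrow> 0"
  proof (rule Lim_null_comparison)
    show "\<forall>\<^sub>F N in sequentially. norm (vinner y (mv (mdiff (xs N) Lm) y)) \<le> vnorm y * (hs_norm (mdiff (xs N) Lm) * vnorm y)"
      using vinner_mv_bound[OF hs_diff_Lm y y] by simp
    show "(\<lambda>N. vnorm y * (hs_norm (mdiff (xs N) Lm) * vnorm y)) \<longlonglongrightarrow> 0"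
      using tendsto_mult[OF tendsto_const tendsto_mult[OF hsn_conv tendsto_const], of "vnorm y" "vnorm y"] by simp
  qed
  then have "(\<lambda>N. vinner y (mv (mdiff (xs N) Lm) y) + vinner y (mv Lm y)) \<longlonglongrightarrow> 0 + vinner y (mv Lm y)"
    by (intro tendsto_add tendsto_const)
  then show ?thesis unfolding e by simp
qed

lemma pos_Lm: "pos_op Lm"
  unfolding pos_op_def
proof (intro allI impI conjI)
  fix y assume y: "ell2 y"
  have p: "vinner y (mv (xs N) y) \<in> \<real> \<and> 0 \<le> Re (vinner y (mv (xs N) y))" for N
    using xs_pos[of N, unfolded pos_op_def, rule_format, OF y] .
  have "(\<lambda>N. Im (vinner y (mv (xs N) y))) \<longlonglongrightarrow> Im (vinner y (mv Lm y))"
    by (rule tendsto_Im[OF quad_conv[OF y]])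
  moreover have "(\<lambda>N. Im (vinner y (mv (xs N) y))) = (\<lambda>N. 0)"
  proof (rule ext)
    fix N show "Im (vinner y (mv (xs N) y)) = 0" using p[of N] by (simp only: complex_is_Real_iff)
  qed
  ultimately have "(\<lambda>N. 0) \<longlonglongrightarrow> Im (vinner y (mv Lm y))" by simp
  then have "Im (vinner y (mv Lm y)) = 0" by (rule LIMSEQ_unique[OF _ tendsto_const])
  then show "vinner y (mv Lm y) \<in> \<real>" by (simp add: complex_is_Real_iff)
  show "0 \<le> Re (vinner y (mv Lm y))"
    by (rule LIMSEQ_le_const[OF tendsto_Re[OF quad_conv[OF y]]]) (use p in \<open>intro exI allI impI; simp\<close>)
qed

lemma xs_diag_sum: "(\<Sum>i<n. Re (xs N i i)) \<le> 1"
proof -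
  have s: "summable (\<lambda>i. xs N i i)" by (rule summable_norm_cancel[OF tc_diag[OF xs_tc]])
  have "(\<Sum>i<n. Re (xs N i i)) \<le> (\<Sum>i. Re (xs N i i))"
    by (rule sum_le_suminf[OF summable_Re[OF s]]) (simp_all add: pos_diag(2)[OF xs_pos])
  also have "\<dots> = Re (trace (xs N))" unfolding trace_def by (rule Re_suminf[OF s, symmetric])
  also have "\<dots> = 1" using xs_tr by simp
  finally show ?thesis .
qed

lemma Lm_diag_summable: "summable (\<lambda>i. Re (Lm i i))"
proof (rule summableI_nonneg_bounded[of _ 1])
  fix n
  have "(\<lambda>N. \<Sum>i<n. Re (xs N i i)) \<longlonglongrightarrow> (\<Sum>i<n. Re (Lm i i))"
    by (intro tendsto_intros Lm_lim)
  then show "(\<Sum>i<n. Re (Lm i i)) \<le> 1"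
    by (rule LIMSEQ_le_const2) (use xs_diag_sum in \<open>intro exI allI impI; simp\<close>)
qed (rule pos_diag(2)[OF pos_Lm])

lemma tc_Lm: "trace_class Lm"
proof -
  have "nuclear_rep Lm (\<lambda>k i. G Lm i k) (\<lambda>k i. G Lm i k)"
    by (rule psd_nuclear[OF pos_herm[OF pos_Lm] pos_Q(2)[OF pos_Lm] Lm_diag_summable])
  then show ?thesis unfolding trace_class_def by blast
qed

lemma hsq_mdiff_sym: "hsq (mdiff X Y) = hsq (mdiff Y X)"
proof -
  have "sqm (mdiff X Y) = sqm (mdiff Y X)" by (intro ext) (simp add: sqm_mdiff norm_minus_commute)
  then show ?thesis by (simp add: hsq_def)
qed

lemma fix_Lm: "\<Omega> Lm = Lm"
proof (intro ext)
  fix i j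
  let ?c = "cmod (\<Omega> Lm i j - Lm i j)"
  have bnd: "?c \<le> hs_norm (mdiff (xs N) Lm) + hs_norm (mdiff (xs (Suc N)) Lm)" for N
  proof -
    let ?t = "mdiff Lm (xs N)"
    have tt: "trace_class ?t" by (rule tc_mdiff[OF tc_Lm xs_tc])
    have Ot: "\<Omega> ?t = mdiff (\<Omega> Lm) (xs (Suc N))"
    proof -
      have "?t = (\<lambda>i j. Lm i j + (-1) * xs N i j)" by (simp add: mdiff_def)
      then have "\<Omega> ?t = (\<lambda>i j. \<Omega> Lm i j + (-1) * \<Omega> (xs N) i j)"
        using linO[OF qc sb tc_Lm xs_tc, of "-1" N] by simp
      then show ?thesis by (simp add: mdiff_def xs_Suc)
    qed
    have hOt: "hs (\<Omega> ?t)" by (rule tc_hs[OF tcO[OF qc sb tt]])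
    have "hsq (\<Omega> ?t) \<le> hsq ?t"
      using contraction[OF qc sb tt] F_diag[OF qc sb tt] by linarith
    then have n1: "hs_norm (\<Omega> ?t) \<le> hs_norm (mdiff (xs N) Lm)"
      unfolding hs_norm_eq hsq_mdiff_sym[of Lm] by simp
    have "cmod (\<Omega> Lm i j - xs (Suc N) i j) \<le> hs_norm (\<Omega> ?t)"
      using hs_entry'[OF hOt, of i j] unfolding Ot by (simp add: mdiff_def)
    moreover have "cmod (xs (Suc N) i j - Lm i j) \<le> hs_norm (mdiff (xs (Suc N)) Lm)"
      using hs_entry'[OF hs_diff_Lm, of "Suc N" i j] by (simp add: mdiff_def)
    moreover have "?c \<le> cmod (\<Omega> Lm i j - xs (Suc N) i j) + cmod (xs (Suc N) i j - Lm i j)"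
      using norm_triangle_ineq[of "\<Omega> Lm i j - xs (Suc N) i j" "xs (Suc N) i j - Lm i j"] by simp
    ultimately show ?thesis using n1 by linarith
  qed
  have "(\<lambda>N. hs_norm (mdiff (xs N) Lm) + hs_norm (mdiff (xs (Suc N)) Lm)) \<longlonglongrightarrow> 0 + 0"
    by (intro tendsto_add hsn_conv LIMSEQ_Suc[OF hsn_conv])
  then have "?c \<le> 0 + 0" by (rule LIMSEQ_le_const) (use bnd in blast)
  then show "\<Omega> Lm i j = Lm i j" by simp
qed


lemma mv_zero: "mv (\<lambda>i j. 0) y = (\<lambda>i. 0)" unfolding mv_def by simp
lemma vinner_zero: "vinner y (\<lambda>i. 0) = 0" unfolding vinner_def by simp

lemma Lm_zero:
  assumes hyp: "\<forall>\<sigma>. density \<sigma> \<longrightarrow>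
           \<not> (\<exists>L. trace_class L \<and> (\<lambda>N. trace_norm (mdiff ((\<Omega> ^^ N) \<sigma>) L)) \<longlonglongrightarrow> 0)"
  shows "Lm = (\<lambda>i j. 0)"
proof (rule ccontr)
  assume nz: "Lm \<noteq> (\<lambda>i j. 0)"
  have dreal: "Lm i i = complex_of_real (Re (Lm i i))" for i
    using pos_diag(1)[OF pos_Lm, of i] by (simp add: complex_is_Real_iff complex_eq_iff)
  obtain i0 where i0: "Lm i0 i0 \<noteq> 0"
  proof (rule ccontr)
    assume "\<not> thesis"
    then have "\<And>i. Lm i i = 0" using that by blast
    then have "Lm a b = 0" for a b
      by (rule psd_zero_diag[OF pos_herm[OF pos_Lm] pos_Q(2)[OF pos_Lm]])
    then show False using nz by (simp add: fun_eq_iff)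
  qed
  define s where "s = (\<Sum>i. Re (Lm i i))"
  have "0 < Re (Lm i0 i0)"
    using i0 dreal[of i0] pos_diag(2)[OF pos_Lm, of i0] by (metis less_eq_real_def of_real_0)
  then have s0: "0 < s" unfolding s_def
    using suminf_pos_iff[OF Lm_diag_summable pos_diag(2)[OF pos_Lm]] by blast
  have sd: "summable (\<lambda>i. Lm i i)" by (rule summable_norm_cancel[OF tc_diag[OF tc_Lm]])
  have trL: "trace Lm = complex_of_real s"
  proof -
    have "trace Lm = (\<Sum>i. complex_of_real (Re (Lm i i)))" unfolding trace_def
      by (subst dreal) (rule refl)
    also have "\<dots> = complex_of_real s" unfolding s_def
      by (rule suminf_of_real[OF Lm_diag_summable, symmetric])
    finally show ?thesis .
  qed
  define c where "c = 1 / complex_of_real s"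
  define \<rho> where "\<rho> = (\<lambda>i j. c * Lm i j)"
  have \<rho>0: "\<rho> = (\<lambda>i j. 0 + c * Lm i j)" by (simp add: \<rho>_def)
  have tc\<rho>: "trace_class \<rho>" unfolding \<rho>_def by (rule tc_scale[OF tc_Lm])
  have tr\<rho>: "trace \<rho> = 1"
  proof -
    have "trace \<rho> = c * trace Lm" unfolding trace_def \<rho>_def by (rule suminf_mult[OF sd])
    then show ?thesis using s0 by (simp add: trL c_def)
  qed
  have pos\<rho>: "pos_op \<rho>"
    unfolding pos_op_def
  proof (intro allI impI)
    fix y assume y: "ell2 y"
    have "vinner y (mv \<rho> y) = vinner y (mv (\<lambda>i j. 0) y) + c * vinner y (mv Lm y)"
      unfolding \<rho>0 by (rule vinner_mv_comb[OF hs_zero hs_Lm y y])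
    then have e: "vinner y (mv \<rho> y) = complex_of_real (1 / s) * vinner y (mv Lm y)"
      by (simp add: mv_zero vinner_zero c_def)
    have p: "vinner y (mv Lm y) \<in> \<real>" "0 \<le> Re (vinner y (mv Lm y))"
      using pos_Lm y unfolding pos_op_def by blast+
    show "vinner y (mv \<rho> y) \<in> \<real> \<and> 0 \<le> Re (vinner y (mv \<rho> y))"
      unfolding e using p s0 by (auto simp: complex_is_Real_iff)
  qed
  have dens\<rho>: "density \<rho>" unfolding density_def using tc\<rho> pos\<rho> tr\<rho> by blast
  have O\<rho>: "\<Omega> \<rho> = \<rho>" unfolding \<rho>_def O_scale[OF qc sb tc_Lm] fix_Lm ..
  have it: "(\<Omega> ^^ N) \<rho> = \<rho>" for N by (induct N) (simp_all add: O\<rho>)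
  have "mdiff \<rho> \<rho> = (\<lambda>i j. 0)" by (simp add: mdiff_def)
  then have "(\<lambda>N. trace_norm (mdiff ((\<Omega> ^^ N) \<rho>) \<rho>)) \<longlonglongrightarrow> 0"
    by (simp add: it trace_norm_zero)
  then show False using hyp dens\<rho> tc\<rho> by blast
qed

lemma trace_outer: "trace (mmult (xs N) (outer \<phi> \<psi>)) = vinner \<psi> (mv (xs N) \<phi>)" if "ell2 \<phi>"
proof -
  have "mmult (xs N) (outer \<phi> \<psi>) i i = cnj (\<psi> i) * mv (xs N) \<phi> i" for i
  proof -
    have "mmult (xs N) (outer \<phi> \<psi>) i i = (\<Sum>k. (xs N i k * \<phi> k) * cnj (\<psi> i))"
      unfolding mmult_def outer_def by (simp add: mult.assoc)
    also have "\<dots> = (\<Sum>k. xs N i k * \<phi> k) * cnj (\<psi> i)"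
      by (rule suminf_mult2[symmetric]) (rule mv_bound(3)[OF xs_hs that])
    finally show ?thesis unfolding mv_def by (simp add: mult.commute)
  qed
  then show ?thesis unfolding trace_def vinner_def by simp
qed

end

theorem lemma2:
  fixes \<Omega> :: "mat \<Rightarrow> mat"
  assumes "quantum_channel \<Omega>"
    and "superop_between_0_1 \<Omega>"
    and "\<forall>\<sigma>. density \<sigma> \<longrightarrow>
           \<not> (\<exists>L. trace_class L \<and> (\<lambda>N. trace_norm (mdiff ((\<Omega> ^^ N) \<sigma>) L)) \<longlonglongrightarrow> 0)"
  shows "\<forall>\<sigma>. density \<sigma> \<longrightarrow>
           (\<lambda>N. hs_norm ((\<Omega> ^^ N) \<sigma>)) \<longlonglongrightarrow> 0 \<and>
           (\<forall>\<phi> \<psi>. ell2 \<phi> \<longrightarrow> ell2 \<psi> \<longrightarrow>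
              (\<lambda>N. trace (mmult ((\<Omega> ^^ N) \<sigma>) (outer \<phi> \<psi>))) \<longlonglongrightarrow> 0)"
proof (intro allI impI)
  fix \<sigma> assume d: "density \<sigma>"
  note qc = assms(1) and sb = assms(2)
  have L0: "Lm \<Omega> \<sigma> = (\<lambda>i j. 0)" by (rule Lm_zero[OF qc sb d assms(3)])
  have e: "mdiff (xs \<Omega> \<sigma> N) (Lm \<Omega> \<sigma>) = (\<Omega> ^^ N) \<sigma>" for N
    unfolding L0 by (simp add: mdiff_def xs_def[OF qc sb d])
  have hn: "(\<lambda>N. hs_norm ((\<Omega> ^^ N) \<sigma>)) \<longlonglongrightarrow> 0"
    using hsn_conv[OF qc sb d] unfolding e .
  moreover have "\<forall>\<phi> \<psi>. ell2 \<phi> \<longrightarrow> ell2 \<psi> \<longrightarrow>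
              (\<lambda>N. trace (mmult ((\<Omega> ^^ N) \<sigma>) (outer \<phi> \<psi>))) \<longlonglongrightarrow> 0"
  proof (intro allI impI)
    fix \<phi> \<psi> assume \<phi>: "ell2 \<phi>" and \<psi>: "ell2 \<psi>"
    have x: "(\<Omega> ^^ N) \<sigma> = xs \<Omega> \<sigma> N" for N by (simp add: xs_def[OF qc sb d])
    show "(\<lambda>N. trace (mmult ((\<Omega> ^^ N) \<sigma>) (outer \<phi> \<psi>))) \<longlonglongrightarrow> 0"
    proof (rule Lim_null_comparison)
      show "\<forall>\<^sub>F N in sequentially. norm (trace (mmult ((\<Omega> ^^ N) \<sigma>) (outer \<phi> \<psi>)))
              \<le> vnorm \<psi> * (hs_norm ((\<Omega> ^^ N) \<sigma>) * vnorm \<phi>)"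
        unfolding x trace_outer[OF qc sb d \<phi>]
        using vinner_mv_bound[OF xs_hs[OF qc sb d] \<phi> \<psi>] by simp
      show "(\<lambda>N. vnorm \<psi> * (hs_norm ((\<Omega> ^^ N) \<sigma>) * vnorm \<phi>)) \<longlonglongrightarrow> 0"
        using tendsto_mult[OF tendsto_const tendsto_mult[OF hn tendsto_const], of "vnorm \<psi>" "vnorm \<phi>"] by simp
    qed
  qed
  ultimately show "(\<lambda>N. hs_norm ((\<Omega> ^^ N) \<sigma>)) \<longlonglongrightarrow> 0 \<and>
           (\<forall>\<phi> \<psi>. ell2 \<phi> \<longrightarrow> ell2 \<psi> \<longrightarrow>
              (\<lambda>N. trace (mmult ((\<Omega> ^^ N) \<sigma>) (outer \<phi> \<psi>))) \<longlonglongrightarrow> 0)" by (rule conjI)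
qed

end
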